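(* Let $\mathbb X$ be a basic space and $\mathcal D=(D,<,\rho)$ a computable partially ordered set. 1. If $<$ is empty, then $\mathrm{PR}[\mathbb X\to\mathcal D]=\mathrm{Max}_{\mathrm{PR}}[\mathbb X\to\mathcal D]$ and $\mathrm{Rec}[\mathbb X\to\mathcal D]=\mathrm{Max}_{\mathrm{Rec}}[\mathbb X\to\mathcal D]$. 2. If $<$ is not empty, then $\mathrm{Max}_{\mathrm{Rec}}[\mathbb X\to\mathcal D]$ contains non-computable total functions; in particular $\mathrm{PR}[\mathbb X\to\mathcal D]\subsetneq\mathrm{Max}_{\mathrm{PR}}[\mathbb X\to\mathcal D]$ and $\mathrm{Rec}[\mathbb X\to\mathcal D]\subsetneq\mathrm{Max}_{\mathrm{Rec}}[\mathbb X\to\mathcal D]$. 3. Whatever $<$ is, $\mathrm{PR}[\mathbb X\to\mathcal D]$ is not included in $\mathrm{Min}_{\mathrm{Rec}}[\mathbb X\to\mathcal D]\cup\mathrm{Max}_{\mathrm{Rec}}[\mathbb X\to\mathcal D]$.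
   Context: A basic space is a finite non-empty product of sets each of which is $\mathbb N$, $\mathbb Z$, or $A^*$ for some finite alphabet $A$. A computable partially ordered set is a triple $\mathcal D=(D,<,\rho)$ where $\rho:\mathbb N\to D$ is a bijection and $<$ is a strict partial order on $D$ with $\{(m,n):\rho(m)<\rho(n)\}$ computable; a partial function into $D$ is partial (resp. total) computable if its composition with $\rho^{-1}$ is. $\mathrm{PR}[\mathbb X\to\mathcal D]$ and $\mathrm{Rec}[\mathbb X\to\mathcal D]$ denote the partial computable and the total computable functions $\mathbb X\to D$. For a partial $f:\mathbb X\times\mathbb N\to D$ monotone increasing (resp. decreasing) in its second argument on its domain, $\max^{\mathcal D}f$ (resp. $\min^{\mathcal D}f$) is the partial function defined exactly at those $x$ for which $\{f(x,t):t,\ f(x,t)\text{ defined}\}$ is finite and non-empty, with value its maximum (resp. minimum). $\mathrm{Max}_{\mathrm{PR}}$ (resp. $\mathrm{Max}_{\mathrm{Rec}}$) $[\mathbb X\to\mathcal D]$ is the class of all $\max^{\mathcal D}f$ with $f$ partial computable (resp. total computable) and monotone increasing in its second argument; $\mathrm{Min}_{\mathrm{Rec}}[\mathbb X\to\mathcal D]$ is the class of all $\min^{\mathcal D}f$ with $f$ total computable and monotone decreasing in its second argument. *)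

theory Defs
  imports Main "HOL-Library.Nat_Bijection"
begin

inductive partrec :: "(nat \<Rightarrow> nat option) \<Rightarrow> bool" where
  pr_zero: "partrec (\<lambda>_. Some 0)"
| pr_succ: "partrec (\<lambda>n. Some (Suc n))"
| pr_left: "partrec (\<lambda>n. Some (fst (prod_decode n)))"
| pr_right: "partrec (\<lambda>n. Some (snd (prod_decode n)))"
| pr_pair: "partrec f \<Longrightarrow> partrec g \<Longrightarrow>
    partrec (\<lambda>n. Option.bind (f n) (\<lambda>a. Option.bind (g n) (\<lambda>b. Some (prod_encode (a, b)))))"
| pr_comp: "partrec f \<Longrightarrow> partrec g \<Longrightarrow> partrec (\<lambda>n. Option.bind (g n) f)"
| pr_prec: "partrec f \<Longrightarrow> partrec g \<Longrightarrow>
    partrec (\<lambda>n. rec_nat (f (fst (prod_decode n)))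
       (\<lambda>y r. Option.bind r (\<lambda>i. g (prod_encode (fst (prod_decode n), prod_encode (y, i)))))
       (snd (prod_decode n)))"
| pr_mu: "partrec f \<Longrightarrow>
    partrec (\<lambda>n. if (\<exists>k. f (prod_encode (n, k)) = Some 0 \<and> (\<forall>j<k. f (prod_encode (n, j)) \<noteq> None))
                 then Some (LEAST k. f (prod_encode (n, k)) = Some 0 \<and> (\<forall>j<k. f (prod_encode (n, j)) \<noteq> None))
                 else None)"

definition decidable_nat :: "(nat \<Rightarrow> bool) \<Rightarrow> bool" where
  "decidable_nat P \<longleftrightarrow> (\<exists>g. partrec g \<and> (\<forall>n. g n = Some (if P n then 1 else 0)))"

text \<open>A factor is N, Z, or A* for a finite alphabet A = {0..<k}.\<close>
datatype bcomp = BN | BZ | BW nat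

datatype bval = VN nat | VZ int | VW "nat list"

fun in_comp :: "bcomp \<Rightarrow> bval \<Rightarrow> bool" where
  "in_comp BN (VN _) = True"
| "in_comp BZ (VZ _) = True"
| "in_comp (BW k) (VW w) = (\<forall>a\<in>set w. a < k)"
| "in_comp _ _ = False"

definition bspace :: "bcomp list \<Rightarrow> bval list set" where
  "bspace cs = {xs. list_all2 in_comp cs xs}"

definition basic_space :: "bcomp list \<Rightarrow> bool" where
  "basic_space cs \<longleftrightarrow> cs \<noteq> [] \<and> (\<forall>k. BW k \<in> set cs \<longrightarrow> k \<ge> 1)"

fun enc_val :: "bval \<Rightarrow> nat" where
  "enc_val (VN n) = n"
| "enc_val (VZ z) = int_encode z"
| "enc_val (VW w) = list_encode w"

text \<open>Standard (injective, decidable-image) coding of basic-space points by naturals.\<close>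
definition benc :: "bval list \<Rightarrow> nat" where
  "benc xs = list_encode (map enc_val xs)"

definition comp_poset :: "('d \<Rightarrow> 'd \<Rightarrow> bool) \<Rightarrow> (nat \<Rightarrow> 'd) \<Rightarrow> bool" where
  "comp_poset lt \<rho> \<longleftrightarrow> bij \<rho> \<and> irreflp lt \<and> transp lt \<and>
     decidable_nat (\<lambda>p. lt (\<rho> (fst (prod_decode p))) (\<rho> (snd (prod_decode p))))"

definition PR :: "bcomp list \<Rightarrow> (nat \<Rightarrow> 'd) \<Rightarrow> (bval list \<Rightarrow> 'd option) set" where
  "PR cs \<rho> = {f. (\<forall>x. x \<notin> bspace cs \<longrightarrow> f x = None) \<and>
      (\<exists>g. partrec g \<and> (\<forall>x\<in>bspace cs. g (benc x) = map_option (inv \<rho>) (f x)))}"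

definition Rec :: "bcomp list \<Rightarrow> (nat \<Rightarrow> 'd) \<Rightarrow> (bval list \<Rightarrow> 'd option) set" where
  "Rec cs \<rho> = {f \<in> PR cs \<rho>. \<forall>x\<in>bspace cs. f x \<noteq> None}"

text \<open>Partial functions X x N -> D (curried), undefined off X x N; computability
  is with respect to the basic space X x N.\<close>
definition PR2 :: "bcomp list \<Rightarrow> (nat \<Rightarrow> 'd) \<Rightarrow> (bval list \<Rightarrow> nat \<Rightarrow> 'd option) set" where
  "PR2 cs \<rho> = {f. (\<forall>x t. x \<notin> bspace cs \<longrightarrow> f x t = None) \<and>
      (\<exists>g. partrec g \<and> (\<forall>x\<in>bspace cs. \<forall>t. g (benc (x @ [VN t])) = map_option (inv \<rho>) (f x t)))}"

definition Rec2 :: "bcomp list \<Rightarrow> (nat \<Rightarrow> 'd) \<Rightarrow> (bval list \<Rightarrow> nat \<Rightarrow> 'd option) set" where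
  "Rec2 cs \<rho> = {f \<in> PR2 cs \<rho>. \<forall>x\<in>bspace cs. \<forall>t. f x t \<noteq> None}"

definition mono_inc :: "('d \<Rightarrow> 'd \<Rightarrow> bool) \<Rightarrow> (bval list \<Rightarrow> nat \<Rightarrow> 'd option) \<Rightarrow> bool" where
  "mono_inc lt f \<longleftrightarrow> (\<forall>x t s a b. t \<le> s \<longrightarrow> f x t = Some a \<longrightarrow> f x s = Some b \<longrightarrow> a = b \<or> lt a b)"

definition mono_dec :: "('d \<Rightarrow> 'd \<Rightarrow> bool) \<Rightarrow> (bval list \<Rightarrow> nat \<Rightarrow> 'd option) \<Rightarrow> bool" where
  "mono_dec lt f \<longleftrightarrow> (\<forall>x t s a b. t \<le> s \<longrightarrow> f x t = Some a \<longrightarrow> f x s = Some b \<longrightarrow> a = b \<or> lt b a)"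

definition maxf :: "('d \<Rightarrow> 'd \<Rightarrow> bool) \<Rightarrow> (bval list \<Rightarrow> nat \<Rightarrow> 'd option) \<Rightarrow> bval list \<Rightarrow> 'd option" where
  "maxf lt f x = (let V = {d. \<exists>t. f x t = Some d} in
     if finite V \<and> V \<noteq> {} then Some (THE m. m \<in> V \<and> (\<forall>d\<in>V. d = m \<or> lt d m)) else None)"

definition minf :: "('d \<Rightarrow> 'd \<Rightarrow> bool) \<Rightarrow> (bval list \<Rightarrow> nat \<Rightarrow> 'd option) \<Rightarrow> bval list \<Rightarrow> 'd option" where
  "minf lt f x = (let V = {d. \<exists>t. f x t = Some d} in
     if finite V \<and> V \<noteq> {} then Some (THE m. m \<in> V \<and> (\<forall>d\<in>V. d = m \<or> lt m d)) else None)"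

definition MaxPR :: "bcomp list \<Rightarrow> ('d \<Rightarrow> 'd \<Rightarrow> bool) \<Rightarrow> (nat \<Rightarrow> 'd) \<Rightarrow> (bval list \<Rightarrow> 'd option) set" where
  "MaxPR cs lt \<rho> = {maxf lt f | f. f \<in> PR2 cs \<rho> \<and> mono_inc lt f}"

definition MaxRec :: "bcomp list \<Rightarrow> ('d \<Rightarrow> 'd \<Rightarrow> bool) \<Rightarrow> (nat \<Rightarrow> 'd) \<Rightarrow> (bval list \<Rightarrow> 'd option) set" where
  "MaxRec cs lt \<rho> = {maxf lt f | f. f \<in> Rec2 cs \<rho> \<and> mono_inc lt f}"

definition MinRec :: "bcomp list \<Rightarrow> ('d \<Rightarrow> 'd \<Rightarrow> bool) \<Rightarrow> (nat \<Rightarrow> 'd) \<Rightarrow> (bval list \<Rightarrow> 'd option) set" where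
  "MinRec cs lt \<rho> = {minf lt f | f. f \<in> Rec2 cs \<rho> \<and> mono_dec lt f}"

end

theory Submission
  imports Defs
begin

abbreviation fN :: "nat \<Rightarrow> nat" where "fN n \<equiv> fst (prod_decode n)"
abbreviation sN :: "nat \<Rightarrow> nat" where "sN n \<equiv> snd (prod_decode n)"
abbreviation PP :: "nat \<Rightarrow> nat \<Rightarrow> nat" where "PP a b \<equiv> prod_encode (a, b)"

definition rf :: "(nat \<Rightarrow> nat) \<Rightarrow> bool" where
  "rf f \<longleftrightarrow> partrec (\<lambda>n. Some (f n))"

lemma rf_cong: "rf f \<Longrightarrow> (\<And>n. f n = g n) \<Longrightarrow> rf g"
proof -
  assume "rf f" "\<And>n. f n = g n"
  then have "f = g" by blast
  with \<open>rf f\<close> show ?thesis by simp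
qed

lemma partrec_cong: "partrec f \<Longrightarrow> (\<And>n. f n = g n) \<Longrightarrow> partrec g"
proof -
  assume "partrec f" "\<And>n. f n = g n"
  then have "f = g" by blast
  with \<open>partrec f\<close> show ?thesis by simp
qed

lemma rf_zero: "rf (\<lambda>_. 0)" unfolding rf_def by (rule pr_zero)
lemma rf_Suc0: "rf Suc" unfolding rf_def by (rule pr_succ)
lemma rf_fst0: "rf (\<lambda>n. fN n)" unfolding rf_def by (rule pr_left)
lemma rf_snd0: "rf (\<lambda>n. sN n)" unfolding rf_def by (rule pr_right)

lemma rf_comp: "rf f \<Longrightarrow> rf g \<Longrightarrow> rf (\<lambda>n. f (g n))"
  unfolding rf_def using pr_comp[of "\<lambda>n. Some (f n)" "\<lambda>n. Some (g n)"] by simp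

lemma rf_pair: "rf f \<Longrightarrow> rf g \<Longrightarrow> rf (\<lambda>n. PP (f n) (g n))"
  unfolding rf_def using pr_pair[of "\<lambda>n. Some (f n)" "\<lambda>n. Some (g n)"] by simp

lemma rf_id: "rf (\<lambda>n. n)"
  using rf_pair[OF rf_fst0 rf_snd0] by simp

lemma rf_const: "rf (\<lambda>_. k)"
proof (induction k)
  case 0 then show ?case by (rule rf_zero)
next
  case (Suc k) then show ?case using rf_comp[OF rf_Suc0, of "\<lambda>_. k"] by simp
qed

lemma rec_nat_Some:
  "rec_nat (Some a) (\<lambda>y r. Option.bind r (\<lambda>i. Some (G y i))) m = Some (rec_nat a G m)"
  by (induction m) auto

lemma rf_prec0:
  assumes "rf f" "rf g"
  shows "rf (\<lambda>n. rec_nat (f (fN n)) (\<lambda>y i. g (PP (fN n) (PP y i))) (sN n))"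
  using assms pr_prec[of "\<lambda>n. Some (f n)" "\<lambda>n. Some (g n)"]
  unfolding rf_def by (simp add: rec_nat_Some)

lemma rec_nat_funpow: "rec_nat a (\<lambda>_ i. F i) m = (F ^^ m) a"
  by (induction m) auto

lemma rf_iter:
  assumes "rf F" "rf init" "rf cnt"
  shows "rf (\<lambda>n. (F ^^ cnt n) (init n))"
proof -
  have "rf (\<lambda>m. rec_nat (fN m) (\<lambda>y i. F (sN (sN (PP (fN m) (PP y i))))) (sN m))"
    by (rule rf_prec0[OF rf_id rf_comp[OF assms(1) rf_comp[OF rf_snd0 rf_snd0]]])
  then have "rf (\<lambda>m. (F ^^ sN m) (fN m))" by (simp add: rec_nat_funpow)
  from rf_comp[OF this rf_pair[OF assms(2) assms(3)]] show ?thesis by simp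
qed

lemma rf_cond0: "rf (\<lambda>m. if sN m = 0 then fN (fN m) else sN (fN m))"
proof -
  have "rf (\<lambda>m. rec_nat (fN (fN m)) (\<lambda>y i. sN (fN (PP (fN m) (PP y i)))) (sN m))"
    by (rule rf_prec0[OF rf_fst0 rf_comp[OF rf_snd0 rf_fst0]])
  moreover have "rec_nat a (\<lambda>y i. b) z = (if z = 0 then a else b)" for a b z :: nat
    by (cases z) auto
  ultimately show ?thesis by simp
qed

lemma rf_cond: "rf c \<Longrightarrow> rf a \<Longrightarrow> rf b \<Longrightarrow> rf (\<lambda>n. if c n = 0 then a n else b n)"
proof -
  assume h: "rf c" "rf a" "rf b"
  show ?thesis by (rule rf_cong[OF rf_comp[OF rf_cond0 rf_pair[OF rf_pair[OF h(2) h(3)] h(1)]]]) simp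
qed

lemma rf_pred: "rf (\<lambda>n. n - 1)"
proof -
  have "rf (\<lambda>m. rec_nat ((\<lambda>_. 0) (fN m)) (\<lambda>y i. fN (sN (PP (fN m) (PP y i)))) (sN m))"
    by (rule rf_prec0[OF rf_zero rf_comp[OF rf_fst0 rf_snd0]])
  moreover have "rec_nat 0 (\<lambda>y i. y) z = z - 1" for z :: nat by (cases z) auto
  ultimately have "rf (\<lambda>m. sN m - 1)" by simp
  from rf_comp[OF this rf_pair[OF rf_zero rf_id]] show ?thesis by simp
qed

lemma funpow_pred: "((\<lambda>n::nat. n - Suc 0) ^^ b) a = a - b"
  by (induction b) auto
lemma funpow_Suc': "(Suc ^^ b) a = a + b"
  by (induction b) auto

lemma rf_minus: "rf f \<Longrightarrow> rf g \<Longrightarrow> rf (\<lambda>n. f n - g n)"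
  using rf_iter[OF rf_pred, of f g] by (simp add: funpow_pred)

lemma rf_plus: "rf f \<Longrightarrow> rf g \<Longrightarrow> rf (\<lambda>n. f n + g n)"
  using rf_iter[OF rf_Suc0, of f g] by (simp add: funpow_Suc' add.commute)

lemma rf_ifeq: "rf c1 \<Longrightarrow> rf c2 \<Longrightarrow> rf a \<Longrightarrow> rf b \<Longrightarrow> rf (\<lambda>n. if c1 n = c2 n then a n else b n)"
proof -
  assume h: "rf c1" "rf c2" "rf a" "rf b"
  have "rf (\<lambda>n. if (c1 n - c2 n) + (c2 n - c1 n) = 0 then a n else b n)"
    by (rule rf_cond[OF rf_plus[OF rf_minus rf_minus] h(3,4)]) (use h in auto)
  moreover have "((c1 n - c2 n) + (c2 n - c1 n) = 0) = (c1 n = c2 n)" for n by auto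
  ultimately show ?thesis by simp
qed

lemma rf_fst: "rf f \<Longrightarrow> rf (\<lambda>n. fN (f n))" using rf_comp[OF rf_fst0] .
lemma rf_snd: "rf f \<Longrightarrow> rf (\<lambda>n. sN (f n))" using rf_comp[OF rf_snd0] .
lemma rf_Suc: "rf f \<Longrightarrow> rf (\<lambda>n. Suc (f n))" using rf_comp[OF rf_Suc0] .

lemmas rf_rules = rf_ifeq rf_pair rf_fst rf_snd rf_Suc rf_minus rf_plus rf_iter rf_id rf_const

lemma partrec_comp_rf: "partrec f \<Longrightarrow> rf g \<Longrightarrow> partrec (\<lambda>n. f (g n))"
  unfolding rf_def using pr_comp[of f "\<lambda>n. Some (g n)"] by simp

lemma partrec_map: "partrec f \<Longrightarrow> rf h \<Longrightarrow> partrec (\<lambda>n. map_option h (f n))"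
proof -
  assume a: "partrec f" "rf h"
  have "partrec (\<lambda>n. Option.bind (f n) (\<lambda>x. Some (h x)))"
    using pr_comp[of "\<lambda>x. Some (h x)" f] a unfolding rf_def by simp
  moreover have "Option.bind (f n) (\<lambda>x. Some (h x)) = map_option h (f n)" for n
    by (cases "f n") auto
  ultimately show ?thesis by simp
qed

lemma partrec_mu_out:
  assumes "rf f" "rf out"
  shows "partrec (\<lambda>n. if \<exists>k. f (PP n k) = 0 then Some (out (PP n (LEAST k. f (PP n k) = 0))) else None)"
proof -
  have m: "partrec (\<lambda>n. if \<exists>k. f (PP n k) = 0 then Some (LEAST k. f (PP n k) = 0) else None)"
    by (rule partrec_cong[OF pr_mu[of "\<lambda>n. Some (f n)"]]) (use assms(1) in \<open>simp_all add: rf_def\<close>)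
  have "partrec (\<lambda>n. Option.bind (Some n) (\<lambda>a. Option.bind (if \<exists>k. f (PP n k) = 0 then Some (LEAST k. f (PP n k) = 0) else None) (\<lambda>b. Some (PP a b))))"
    by (rule pr_pair[OF _ m]) (use rf_id in \<open>simp add: rf_def\<close>)
  then have "partrec (\<lambda>n. if \<exists>k. f (PP n k) = 0 then Some (PP n (LEAST k. f (PP n k) = 0)) else None)"
    by (rule partrec_cong) simp
  from partrec_map[OF this assms(2)] show ?thesis
    by (simp add: if_distrib cong: if_cong)
qed


datatype code = Zero | Succ | Lft | Rgt | Pair code code | Comp code code | Prec code code | Mu code

primrec sem :: "code \<Rightarrow> nat \<Rightarrow> nat option" where
  "sem Zero = (\<lambda>_. Some 0)"
| "sem Succ = (\<lambda>n. Some (Suc n))"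
| "sem Lft = (\<lambda>n. Some (fst (prod_decode n)))"
| "sem Rgt = (\<lambda>n. Some (snd (prod_decode n)))"
| "sem (Pair c d) = (\<lambda>n. Option.bind (sem c n) (\<lambda>a. Option.bind (sem d n) (\<lambda>b. Some (prod_encode (a, b)))))"
| "sem (Comp f g) = (\<lambda>n. Option.bind (sem g n) (sem f))"
| "sem (Prec f g) = (\<lambda>n. rec_nat (sem f (fst (prod_decode n)))
       (\<lambda>y r. Option.bind r (\<lambda>i. sem g (prod_encode (fst (prod_decode n), prod_encode (y, i)))))
       (snd (prod_decode n)))"
| "sem (Mu f) = (\<lambda>n. if (\<exists>k. sem f (prod_encode (n, k)) = Some 0 \<and> (\<forall>j<k. sem f (prod_encode (n, j)) \<noteq> None))
                 then Some (LEAST k. sem f (prod_encode (n, k)) = Some 0 \<and> (\<forall>j<k. sem f (prod_encode (n, j)) \<noteq> None))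
                 else None)"

lemma partrec_code: "partrec f \<Longrightarrow> \<exists>c. sem c = f"
proof (induction rule: partrec.induct)
  case pr_zero show ?case by (rule exI[of _ Zero]) simp
next
  case pr_succ show ?case by (rule exI[of _ Succ]) simp
next
  case pr_left show ?case by (rule exI[of _ Lft]) simp
next
  case pr_right show ?case by (rule exI[of _ Rgt]) simp
next
  case (pr_pair f g)
  then obtain c d where "sem c = f" "sem d = g" by blast
  then show ?case by (intro exI[of _ "Pair c d"]) simp
next
  case (pr_comp f g)
  then obtain c d where "sem c = f" "sem d = g" by blast
  then show ?case by (intro exI[of _ "Comp c d"]) simp
next
  case (pr_prec f g)
  then obtain c d where "sem c = f" "sem d = g" by blast
  then show ?case by (intro exI[of _ "Prec c d"]) simp
next
  case (pr_mu f)
  then obtain c where c: "sem c = f" by blast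
  show ?case apply (rule exI[of _ "Mu c"]) unfolding sem.simps c by (rule refl)
qed

datatype cont = Khalt | KpairL code nat cont | KpairR nat cont | Kcomp code cont
  | Kprec code nat nat nat cont | Kmu code nat nat cont

datatype cfg = Eval code nat cont | Ret cont nat | Halt nat

fun step :: "cfg \<Rightarrow> cfg" where
  "step (Eval Zero n k) = Ret k 0"
| "step (Eval Succ n k) = Ret k (Suc n)"
| "step (Eval Lft n k) = Ret k (fN n)"
| "step (Eval Rgt n k) = Ret k (sN n)"
| "step (Eval (Pair c d) n k) = Eval c n (KpairL d n k)"
| "step (Eval (Comp f g) n k) = Eval g n (Kcomp f k)"
| "step (Eval (Prec f g) n k) = Eval f (fN n) (Kprec g (fN n) 0 (sN n) k)"
| "step (Eval (Mu f) n k) = Eval f (PP n 0) (Kmu f n 0 k)"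
| "step (Ret Khalt v) = Halt v"
| "step (Ret (KpairL d n k) a) = Eval d n (KpairR a k)"
| "step (Ret (KpairR a k) b) = Ret k (PP a b)"
| "step (Ret (Kcomp f k) v) = Eval f v k"
| "step (Ret (Kprec g x i y k) r) = (if i = y then Ret k r else Eval g (PP x (PP i r)) (Kprec g x (Suc i) y k))"
| "step (Ret (Kmu f n j k) v) = (if v = 0 then Ret k j else Eval f (PP n (Suc j)) (Kmu f n (Suc j) k))"
| "step (Halt v) = Halt v"

primrec encc :: "code \<Rightarrow> nat" where
  "encc Zero = PP 0 0"
| "encc Succ = PP 1 0"
| "encc Lft = PP 2 0"
| "encc Rgt = PP 3 0"
| "encc (Pair c d) = PP 4 (PP (encc c) (encc d))"
| "encc (Comp f g) = PP 5 (PP (encc f) (encc g))"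
| "encc (Prec f g) = PP 6 (PP (encc f) (encc g))"
| "encc (Mu f) = PP 7 (encc f)"

primrec enck :: "cont \<Rightarrow> nat" where
  "enck Khalt = PP 0 0"
| "enck (KpairL d n k) = PP 1 (PP (encc d) (PP n (enck k)))"
| "enck (KpairR a k) = PP 2 (PP a (enck k))"
| "enck (Kcomp f k) = PP 3 (PP (encc f) (enck k))"
| "enck (Kprec g x i y k) = PP 4 (PP (encc g) (PP x (PP i (PP y (enck k)))))"
| "enck (Kmu f n j k) = PP 5 (PP (encc f) (PP n (PP j (enck k))))"

primrec encg :: "cfg \<Rightarrow> nat" where
  "encg (Eval c n k) = PP 0 (PP (encc c) (PP n (enck k)))"
| "encg (Ret k v) = PP 1 (PP (enck k) v)"
| "encg (Halt v) = PP 2 v"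

definition stepE :: "nat \<Rightarrow> nat" where
  "stepE b = (let c = fN b; n = fN (sN b); k = sN (sN b); ct = fN c; ca = sN c in
     if ct = 0 then PP 1 (PP k 0)
     else if ct = 1 then PP 1 (PP k (Suc n))
     else if ct = 2 then PP 1 (PP k (fN n))
     else if ct = 3 then PP 1 (PP k (sN n))
     else if ct = 4 then PP 0 (PP (fN ca) (PP n (PP 1 (PP (sN ca) (PP n k)))))
     else if ct = 5 then PP 0 (PP (sN ca) (PP n (PP 3 (PP (fN ca) k))))
     else if ct = 6 then PP 0 (PP (fN ca) (PP (fN n) (PP 4 (PP (sN ca) (PP (fN n) (PP 0 (PP (sN n) k)))))))
     else PP 0 (PP ca (PP (PP n 0) (PP 5 (PP ca (PP n (PP 0 k)))))))"

definition stepR :: "nat \<Rightarrow> nat" where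
  "stepR b = (let k = fN b; v = sN b; kt = fN k; kb = sN k in
     if kt = 0 then PP 2 v
     else if kt = 1 then PP 0 (PP (fN kb) (PP (fN (sN kb)) (PP 2 (PP v (sN (sN kb))))))
     else if kt = 2 then PP 1 (PP (sN kb) (PP (fN kb) v))
     else if kt = 3 then PP 0 (PP (fN kb) (PP v (sN kb)))
     else if kt = 4 then (let g = fN kb; x = fN (sN kb); i = fN (sN (sN kb)); y = fN (sN (sN (sN kb))); k' = sN (sN (sN (sN kb))) in
         if i = y then PP 1 (PP k' v) else PP 0 (PP g (PP (PP x (PP i v)) (PP 4 (PP g (PP x (PP (Suc i) (PP y k'))))))))
     else (let f = fN kb; n = fN (sN kb); j = fN (sN (sN kb)); k' = sN (sN (sN kb)) in
         if v = 0 then PP 1 (PP k' j) else PP 0 (PP f (PP (PP n (Suc j)) (PP 5 (PP f (PP n (PP (Suc j) k'))))))))"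

definition stepN :: "nat \<Rightarrow> nat" where
  "stepN z = (if fN z = 0 then stepE (sN z) else if fN z = 1 then stepR (sN z) else z)"

lemma stepN_enc: "stepN (encg c) = encg (step c)"
proof (cases c)
  case (Eval cd n k) then show ?thesis by (cases cd) (simp_all add: stepN_def stepE_def stepR_def Let_def)
next
  case (Ret k v) then show ?thesis by (cases k) (simp_all add: stepN_def stepE_def stepR_def Let_def)
next
  case (Halt v) then show ?thesis by (simp add: stepN_def)
qed

lemma stepN_fix: "fN z = 2 \<Longrightarrow> stepN z = z"
  by (simp add: stepN_def)

lemma rf_stepN: "rf stepN"
proof -
  have e: "rf (\<lambda>z. stepE z)" unfolding stepE_def Let_def by (intro rf_rules)
  have r: "rf (\<lambda>z. stepR z)" unfolding stepR_def Let_def by (intro rf_rules)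
  have "rf (\<lambda>z. stepN z)" unfolding stepN_def by (intro rf_rules rf_comp[OF e] rf_comp[OF r])
  then show ?thesis by simp
qed


definition run :: "nat \<Rightarrow> cfg \<Rightarrow> cfg" where "run s c = (step ^^ s) c"

lemma run_0[simp]: "run 0 c = c" by (simp add: run_def)
lemma run_Suc: "run (Suc s) c = run s (step c)" unfolding run_def funpow_Suc_right by simp
lemma run_Halt[simp]: "run s (Halt v) = Halt v" by (induction s) (simp_all add: run_Suc)

abbreviation reach :: "cfg \<Rightarrow> cfg \<Rightarrow> bool" where "reach \<equiv> (\<lambda>x y. y = step x)\<^sup>*\<^sup>*"

lemma reach_stepI: "reach (step x) z \<Longrightarrow> reach x z"
  by (rule converse_rtranclp_into_rtranclp[of _ x "step x"]) auto

lemma reach_run: "reach x z \<Longrightarrow> \<exists>s. run s x = z"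
proof (induction rule: converse_rtranclp_induct)
  case base then show ?case by (rule exI[of _ 0]) simp
next
  case (step a b)
  then obtain s where "run s b = z" by blast
  with step show ?case by (metis run_Suc)
qed

lemma run_nonhalt: "run s x = Halt w \<Longrightarrow> (\<And>v. x \<noteq> Halt v) \<Longrightarrow> \<exists>s0. s = Suc s0 \<and> run s0 (step x) = Halt w"
  by (cases s) (auto simp: run_Suc)

lemma rec_none_mono:
  assumes "rec_nat a G j = (None :: nat option)" "\<And>y. G y None = None" "j \<le> j'"
  shows "rec_nat a G j' = None"
  using assms(3)
proof (induction j')
  case 0 then show ?case using assms(1) by simp
next
  case (Suc j') then show ?case using assms(1,2) by (cases "j = Suc j'") auto
qed

lemma fwd: "sem c n = Some v \<Longrightarrow> reach (Eval c n k) (Ret k v)"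
proof (induction c arbitrary: n v k)
  case Zero show ?case by (rule reach_stepI) (use Zero in simp)
next
  case Succ show ?case by (rule reach_stepI) (use Succ in simp)
next
  case Lft show ?case by (rule reach_stepI) (use Lft in simp)
next
  case Rgt show ?case by (rule reach_stepI) (use Rgt in simp)
next
  case (Pair c d)
  then obtain a b where ab: "sem c n = Some a" "sem d n = Some b" "v = PP a b"
    by (auto split: Option.bind_splits)
  have "reach (Eval c n (KpairL d n k)) (Ret (KpairL d n k) a)" using Pair.IH(1) ab by blast
  moreover have "reach (Ret (KpairL d n k) a) (Ret (KpairR a k) b)"
    by (rule reach_stepI) (use Pair.IH(2) ab in simp)
  moreover have "reach (Ret (KpairR a k) b) (Ret k v)"
    by (rule reach_stepI) (use ab in simp)
  ultimately have "reach (Eval c n (KpairL d n k)) (Ret k v)" by (meson rtranclp_trans)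
  then show ?case by - (rule reach_stepI, simp)
next
  case (Comp f g)
  then obtain u where u: "sem g n = Some u" "sem f u = Some v"
    by (auto split: Option.bind_splits)
  have "reach (Eval g n (Kcomp f k)) (Ret (Kcomp f k) u)" using Comp.IH(2) u by blast
  moreover have "reach (Ret (Kcomp f k) u) (Ret k v)"
    by (rule reach_stepI) (use Comp.IH(1) u in simp)
  ultimately have "reach (Eval g n (Kcomp f k)) (Ret k v)" by (meson rtranclp_trans)
  then show ?case by - (rule reach_stepI, simp)
next
  case (Prec f g)
  define x where "x = fN n"
  define y where "y = sN n"
  define R where "R i = rec_nat (sem f x) (\<lambda>y r. Option.bind r (\<lambda>i. sem g (PP x (PP y i)))) i" for i
  have Ry: "R y = Some v" using Prec.prems unfolding R_def x_def y_def by simp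
  have Rnone: "R j = None \<Longrightarrow> j \<le> j' \<Longrightarrow> R j' = None" for j j'
    unfolding R_def by (rule rec_none_mono) auto
  have inner: "\<forall>i r. y - i = d \<longrightarrow> i \<le> y \<longrightarrow> R i = Some r \<longrightarrow> reach (Ret (Kprec g x i y k) r) (Ret k v)" for d
  proof (induction d)
    case 0
    show ?case
    proof (intro allI impI)
      fix i r assume h: "y - i = 0" "i \<le> y" "R i = Some r"
      then have "i = y" "r = v" using Ry by auto
      then show "reach (Ret (Kprec g x i y k) r) (Ret k v)" by - (rule reach_stepI, simp)
    qed
  next
    case (Suc d)
    show ?case
    proof (intro allI impI)
      fix i r assume h: "y - i = Suc d" "i \<le> y" "R i = Some r"
      have "R (Suc i) = sem g (PP x (PP i r))" using h(3) unfolding R_def by simp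
      moreover have "Suc i \<le> y" using h by simp
      then have "R (Suc i) \<noteq> None" using Rnone[of "Suc i" y] Ry by auto
      ultimately obtain r' where r': "sem g (PP x (PP i r)) = Some r'" "R (Suc i) = Some r'" by auto
      have "reach (Eval g (PP x (PP i r)) (Kprec g x (Suc i) y k)) (Ret (Kprec g x (Suc i) y k) r')"
        using Prec.IH(2) r' by blast
      moreover have "reach (Ret (Kprec g x (Suc i) y k) r') (Ret k v)"
        using Suc.IH h r' by auto
      ultimately have "reach (Eval g (PP x (PP i r)) (Kprec g x (Suc i) y k)) (Ret k v)" by (rule rtranclp_trans)
      moreover have "i \<noteq> y" using h by simp
      ultimately show "reach (Ret (Kprec g x i y k) r) (Ret k v)"
        by - (rule reach_stepI, simp)
    qed
  qed
  have "R 0 \<noteq> None" using Rnone[of 0 y] Ry by auto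
  then obtain r0 where r0: "sem f x = Some r0" unfolding R_def by auto
  then have "reach (Eval f x (Kprec g x 0 y k)) (Ret (Kprec g x 0 y k) r0)" using Prec.IH(1) by blast
  moreover have "reach (Ret (Kprec g x 0 y k) r0) (Ret k v)" using inner r0 unfolding R_def by auto
  ultimately have "reach (Eval f x (Kprec g x 0 y k)) (Ret k v)" by (rule rtranclp_trans)
  then show ?case unfolding x_def y_def by - (rule reach_stepI, simp)
next
  case (Mu f)
  define Q where "Q j = (sem f (PP n j) = Some 0 \<and> (\<forall>i<j. sem f (PP n i) \<noteq> None))" for j
  have e0: "(if \<exists>j. Q j then Some (LEAST j. Q j) else None) = Some v"
    using Mu.prems unfolding Q_def by simp
  have ex: "\<exists>j. Q j" using e0 by (cases "\<exists>j. Q j") auto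
  have vdef: "v = (LEAST j. Q j)" using e0 ex by simp
  have QK: "Q v" unfolding vdef using ex by (rule LeastI_ex)
  have lt: "j < v \<Longrightarrow> \<exists>w. sem f (PP n j) = Some w \<and> w \<noteq> 0" for j
  proof -
    assume "j < v"
    then have "\<not> Q j" unfolding vdef by (rule not_less_Least)
    moreover obtain w where "sem f (PP n j) = Some w" using QK \<open>j < v\<close> unfolding Q_def by auto
    moreover have "\<forall>i<j. sem f (PP n i) \<noteq> None" using QK \<open>j < v\<close> unfolding Q_def by auto
    ultimately show ?thesis unfolding Q_def by auto
  qed
  have inner: "\<forall>j. v - j = d \<longrightarrow> j \<le> v \<longrightarrow> reach (Eval f (PP n j) (Kmu f n j k)) (Ret k v)" for d
  proof (induction d)
    case 0
    show ?case
    proof (intro allI impI)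
      fix j assume "v - j = 0" "j \<le> v"
      then have "j = v" by simp
      have "reach (Eval f (PP n j) (Kmu f n j k)) (Ret (Kmu f n j k) 0)"
        using Mu.IH QK \<open>j = v\<close> unfolding Q_def by blast
      moreover have "reach (Ret (Kmu f n j k) 0) (Ret k v)" using \<open>j = v\<close> by - (rule reach_stepI, simp)
      ultimately show "reach (Eval f (PP n j) (Kmu f n j k)) (Ret k v)" by (rule rtranclp_trans)
    qed
  next
    case (Suc d)
    show ?case
    proof (intro allI impI)
      fix j assume h: "v - j = Suc d" "j \<le> v"
      then have "j < v" by simp
      then obtain w where w: "sem f (PP n j) = Some w" "w \<noteq> 0" using lt by blast
      have "reach (Eval f (PP n j) (Kmu f n j k)) (Ret (Kmu f n j k) w)" using Mu.IH w by blast
      moreover have "reach (Eval f (PP n (Suc j)) (Kmu f n (Suc j) k)) (Ret k v)"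
        using h Suc.IH by simp
      then have "reach (Ret (Kmu f n j k) w) (Ret k v)"
        using w by - (rule reach_stepI, simp)
      ultimately show "reach (Eval f (PP n j) (Kmu f n j k)) (Ret k v)" by (rule rtranclp_trans)
    qed
  qed
  have "reach (Eval f (PP n 0) (Kmu f n 0 k)) (Ret k v)" using inner by simp
  then show ?case by - (rule reach_stepI, simp)
qed

lemma bwd: "run s (Eval c n k) = Halt w \<Longrightarrow> \<exists>v s'. sem c n = Some v \<and> s' < s \<and> run s' (Ret k v) = Halt w"
proof (induction s arbitrary: c n k w rule: less_induct)
  case (less s)
  note outerIH = less.IH
  obtain s0 where s0: "s = Suc s0" "run s0 (step (Eval c n k)) = Halt w"
    using run_nonhalt[OF less.prems] by auto
  show ?case
  proof (cases c)
    case Zero then show ?thesis using s0 by auto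
  next
    case Succ then show ?thesis using s0 by auto
  next
    case Lft then show ?thesis using s0 by auto
  next
    case Rgt then show ?thesis using s0 by auto
  next
    case (Pair c1 d)
    then have "run s0 (Eval c1 n (KpairL d n k)) = Halt w" using s0 by simp
    then obtain a s1 where a: "sem c1 n = Some a" "s1 < s0" "run s1 (Ret (KpairL d n k) a) = Halt w"
      using less.IH[of s0] s0 by blast
    obtain s2 where s2: "s1 = Suc s2" "run s2 (Eval d n (KpairR a k)) = Halt w"
      using run_nonhalt[OF a(3)] by auto
    have "s2 < s" using s2 a s0 by simp
    from outerIH[OF this s2(2)] obtain b s3 where b: "sem d n = Some b" "s3 < s2" "run s3 (Ret (KpairR a k) b) = Halt w"
      by blast
    obtain s4 where s4: "s3 = Suc s4" "run s4 (Ret k (PP a b)) = Halt w"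
      using run_nonhalt[OF b(3)] by auto
    show ?thesis using Pair a b s4 s2 s0 by (intro exI[of _ "PP a b"] exI[of _ s4]) simp
  next
    case (Comp f g)
    then have "run s0 (Eval g n (Kcomp f k)) = Halt w" using s0 by simp
    then obtain a s1 where a: "sem g n = Some a" "s1 < s0" "run s1 (Ret (Kcomp f k) a) = Halt w"
      using less.IH[of s0] s0 by blast
    obtain s2 where s2: "s1 = Suc s2" "run s2 (Eval f a k) = Halt w"
      using run_nonhalt[OF a(3)] by auto
    have "s2 < s" using s2 a s0 by simp
    from outerIH[OF this s2(2)] obtain b s3 where b: "sem f a = Some b" "s3 < s2" "run s3 (Ret k b) = Halt w"
      by blast
    show ?thesis using Comp a b s2 s0 by (intro exI[of _ b] exI[of _ s3]) simp
  next
    case (Prec f g)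
    define x where "x = fN n"
    define y where "y = sN n"
    define R where "R i = rec_nat (sem f x) (\<lambda>y r. Option.bind r (\<lambda>i. sem g (PP x (PP y i)))) i" for i
    have inner: "\<forall>i r s1. y - i = d \<longrightarrow> i \<le> y \<longrightarrow> s1 < s \<longrightarrow> R i = Some r \<longrightarrow>
        run s1 (Ret (Kprec g x i y k) r) = Halt w \<longrightarrow> (\<exists>v s'. R y = Some v \<and> s' < s \<and> run s' (Ret k v) = Halt w)" for d
    proof (induction d)
      case 0
      show ?case
      proof (intro allI impI)
        fix i r s1 assume h: "y - i = 0" "i \<le> y" "s1 < s" "R i = Some r" "run s1 (Ret (Kprec g x i y k) r) = Halt w"
        then have iy: "i = y" by simp
        obtain s2 where "s1 = Suc s2" "run s2 (Ret k r) = Halt w"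
          using run_nonhalt[OF h(5)] iy by auto
        then show "\<exists>v s'. R y = Some v \<and> s' < s \<and> run s' (Ret k v) = Halt w"
          using h iy by (intro exI[of _ r] exI[of _ s2]) simp
      qed
    next
      case (Suc d)
      show ?case
      proof (intro allI impI)
        fix i r s1 assume h: "y - i = Suc d" "i \<le> y" "s1 < s" "R i = Some r" "run s1 (Ret (Kprec g x i y k) r) = Halt w"
        then have iy: "i \<noteq> y" by simp
        obtain s2 where s2: "s1 = Suc s2" "run s2 (Eval g (PP x (PP i r)) (Kprec g x (Suc i) y k)) = Halt w"
          using run_nonhalt[OF h(5)] iy by auto
        have "s2 < s" using s2 h by simp
        from outerIH[OF this s2(2)] obtain r' s3 where r': "sem g (PP x (PP i r)) = Some r'" "s3 < s2" "run s3 (Ret (Kprec g x (Suc i) y k) r') = Halt w"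
          by blast
        have "R (Suc i) = Some r'" using h(4) r'(1) unfolding R_def by simp
        then show "\<exists>v s'. R y = Some v \<and> s' < s \<and> run s' (Ret k v) = Halt w"
        proof -
          have "y - Suc i = d" "Suc i \<le> y" using h iy by auto
          moreover have "s3 < s" using r' s2 h by simp
          ultimately show ?thesis using Suc.IH \<open>R (Suc i) = Some r'\<close> r'(3) by blast
        qed
      qed
    qed
    have "run s0 (Eval f x (Kprec g x 0 y k)) = Halt w" using s0 Prec unfolding x_def y_def by simp
    then obtain r0 s1 where r0: "sem f x = Some r0" "s1 < s0" "run s1 (Ret (Kprec g x 0 y k) r0) = Halt w"
      using less.IH[of s0] s0 by blast
    have "R 0 = Some r0" using r0 unfolding R_def by simp
    moreover have "s1 < s" using r0 s0 by simp
    ultimately obtain v s' where "R y = Some v" "s' < s" "run s' (Ret k v) = Halt w"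
      using inner[of "y - 0"] r0(3) by blast
    moreover have "sem c n = R y" unfolding R_def x_def y_def Prec by simp
    ultimately show ?thesis by auto
  next
    case (Mu f)
    define Q where "Q j = (sem f (PP n j) = Some 0 \<and> (\<forall>i<j. sem f (PP n i) \<noteq> None))" for j
    have semc: "sem c n = (if \<exists>j. Q j then Some (LEAST j. Q j) else None)"
      unfolding Mu Q_def by simp
    have inner: "\<forall>j. s1 < s \<longrightarrow> (\<forall>i<j. \<exists>u. sem f (PP n i) = Some u \<and> u \<noteq> 0) \<longrightarrow>
       run s1 (Eval f (PP n j) (Kmu f n j k)) = Halt w \<longrightarrow>
       (\<exists>v s'. sem c n = Some v \<and> s' < s \<and> run s' (Ret k v) = Halt w)" for s1
    proof (induction s1 rule: less_induct)
      case (less s1)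
      show ?case
      proof (intro allI impI)
        fix j assume h: "s1 < s" "\<forall>i<j. \<exists>u. sem f (PP n i) = Some u \<and> u \<noteq> 0"
          "run s1 (Eval f (PP n j) (Kmu f n j k)) = Halt w"
        obtain u s2 where u: "sem f (PP n j) = Some u" "s2 < s1" "run s2 (Ret (Kmu f n j k) u) = Halt w"
          using outerIH[OF h(1,3)] by blast
        obtain s3 where s3: "s2 = Suc s3" "run s3 (step (Ret (Kmu f n j k) u)) = Halt w"
          using run_nonhalt[OF u(3)] by auto
        show "\<exists>v s'. sem c n = Some v \<and> s' < s \<and> run s' (Ret k v) = Halt w"
        proof (cases "u = 0")
          case True
          have Qj: "Q j" unfolding Q_def using u True h(2) by auto
          have "(LEAST j. Q j) = j"
          proof (rule Least_equality[of Q, OF Qj])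
            fix i assume "Q i"
            show "j \<le> i"
            proof (rule ccontr)
              assume "\<not> j \<le> i"
              then have "i < j" by simp
              then obtain u' where "sem f (PP n i) = Some u'" "u' \<noteq> 0" using h(2) by blast
              with \<open>Q i\<close> show False unfolding Q_def by simp
            qed
          qed
          then have "sem c n = Some j" using semc Qj by auto
          moreover have "run s3 (Ret k j) = Halt w" using s3 True by simp
          moreover have "s3 < s" using s3 u h by simp
          ultimately show ?thesis by blast
        next
          case False
          have r: "run s3 (Eval f (PP n (Suc j)) (Kmu f n (Suc j) k)) = Halt w" using s3 False by simp
          have "\<forall>i<Suc j. \<exists>u. sem f (PP n i) = Some u \<and> u \<noteq> 0"
            using h(2) u False less_Suc_eq by auto
          moreover have "s3 < s1" "s3 < s" using s3 u h by auto
          ultimately show ?thesis using less.IH r by blast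
        qed
      qed
    qed
    have "run s0 (Eval f (PP n 0) (Kmu f n 0 k)) = Halt w" using s0 Mu by simp
    moreover have "s0 < s" using s0 by simp
    ultimately show ?thesis using inner[of s0] by blast
  qed
qed



lemma runN: "(stepN ^^ s) (encg c) = encg (run s c)"
proof (induction s arbitrary: c)
  case 0 then show ?case by simp
next
  case (Suc s) then show ?case unfolding funpow_Suc_right by (simp add: stepN_enc run_Suc)
qed

definition evtag :: "nat \<Rightarrow> nat \<Rightarrow> nat \<Rightarrow> nat" where
  "evtag c n s = fN ((stepN ^^ s) (PP 0 (PP c (PP n (PP 0 0)))))"
definition evval :: "nat \<Rightarrow> nat \<Rightarrow> nat \<Rightarrow> nat" where
  "evval c n s = sN ((stepN ^^ s) (PP 0 (PP c (PP n (PP 0 0)))))"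
definition evalk :: "nat \<Rightarrow> nat \<Rightarrow> nat \<Rightarrow> nat option" where
  "evalk c n s = (if evtag c n s = 2 then Some (evval c n s) else None)"

lemma rf_evtag: "rf a \<Longrightarrow> rf b \<Longrightarrow> rf c \<Longrightarrow> rf (\<lambda>m. evtag (a m) (b m) (c m))"
  unfolding evtag_def by (intro rf_rules rf_stepN)
lemma rf_evval: "rf a \<Longrightarrow> rf b \<Longrightarrow> rf c \<Longrightarrow> rf (\<lambda>m. evval (a m) (b m) (c m))"
  unfolding evval_def by (intro rf_rules rf_stepN)

lemma evalk_enc: "evalk (encc cd) n s = (case run s (Eval cd n Khalt) of Halt v \<Rightarrow> Some v | _ \<Rightarrow> None)"
proof -
  have "PP 0 (PP (encc cd) (PP n (PP 0 0))) = encg (Eval cd n Khalt)" by simp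
  then have "(stepN ^^ s) (PP 0 (PP (encc cd) (PP n (PP 0 0)))) = encg (run s (Eval cd n Khalt))"
    by (simp only: runN)
  then show ?thesis unfolding evalk_def evtag_def evval_def
    by (cases "run s (Eval cd n Khalt)") simp_all
qed

lemma sem_evalk: "sem cd n = Some v \<longleftrightarrow> (\<exists>s. evalk (encc cd) n s = Some v)"
proof
  assume "sem cd n = Some v"
  then have "reach (Eval cd n Khalt) (Ret Khalt v)" by (rule fwd)
  moreover have "reach (Ret Khalt v) (Halt v)" by (rule r_into_rtranclp) simp
  ultimately have "reach (Eval cd n Khalt) (Halt v)" by (rule rtranclp_trans)
  then obtain s where "run s (Eval cd n Khalt) = Halt v" using reach_run by blast
  then have "evalk (encc cd) n s = Some v" by (simp add: evalk_enc)
  then show "\<exists>s. evalk (encc cd) n s = Some v" by blast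
next
  assume "\<exists>s. evalk (encc cd) n s = Some v"
  then obtain s where e: "evalk (encc cd) n s = Some v" by blast
  have "run s (Eval cd n Khalt) = Halt v"
    using e unfolding evalk_enc by (cases "run s (Eval cd n Khalt)") auto
  then obtain v' s' where h: "sem cd n = Some v'" "run s' (Ret Khalt v') = Halt v" using bwd by blast
  then obtain s0 where "run s0 (Halt v') = Halt v" using run_nonhalt[OF h(2)] by auto
  then show "sem cd n = Some v" using h by simp
qed


lemma funpow_fix: "F z = z \<Longrightarrow> (F ^^ m) z = z"
  by (induction m) auto

lemma evalk_mono: "evalk c n s = Some v \<Longrightarrow> s \<le> s' \<Longrightarrow> evalk c n s' = Some v"
proof -
  assume a: "evalk c n s = Some v" "s \<le> s'"
  define z where "z = (stepN ^^ s) (PP 0 (PP c (PP n (PP 0 0))))"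
  have ez: "evalk c n s = (if fN z = 2 then Some (sN z) else None)"
    unfolding evalk_def evtag_def evval_def z_def by (rule refl)
  have z2: "fN z = 2" "sN z = v" using a(1) unfolding ez by (cases "fN z = 2", simp_all)+
  have "(stepN ^^ ((s' - s) + s)) (PP 0 (PP c (PP n (PP 0 0)))) = (stepN ^^ (s' - s)) z"
    unfolding z_def by (simp only: funpow_add comp_def)
  moreover have "(s' - s) + s = s'" using a(2) by simp
  ultimately have "(stepN ^^ s') (PP 0 (PP c (PP n (PP 0 0)))) = (stepN ^^ (s' - s)) z" by (simp only:)
  also have "\<dots> = z" by (rule funpow_fix) (rule stepN_fix[OF z2(1)])
  finally show ?thesis using z2 unfolding evalk_def evtag_def evval_def by simp
qed

lemma evalk_unique: "evalk c n s1 = Some a \<Longrightarrow> evalk c n s2 = Some b \<Longrightarrow> a = b"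
proof -
  assume "evalk c n s1 = Some a" "evalk c n s2 = Some b"
  then have "evalk c n (max s1 s2) = Some a" "evalk c n (max s1 s2) = Some b"
    by (auto intro: evalk_mono)
  then show "a = b" by simp
qed


primrec app :: "nat \<Rightarrow> nat \<Rightarrow> nat \<Rightarrow> nat" where
  "app 0 n t = Suc (PP t 0)"
| "app (Suc m) n t = Suc (PP (fN (n - 1)) (app m (sN (n - 1)) t))"

primrec trunc :: "nat \<Rightarrow> nat \<Rightarrow> nat" where
  "trunc 0 n = 0"
| "trunc (Suc m) n = Suc (PP (fN (n - 1)) (trunc m (sN (n - 1))))"

primrec lastc :: "nat \<Rightarrow> nat \<Rightarrow> nat" where
  "lastc 0 n = fN (n - 1)"
| "lastc (Suc m) n = lastc m (sN (n - 1))"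

lemma app_enc: "length xs = m \<Longrightarrow> app m (list_encode xs) t = list_encode (xs @ [t])"
proof (induction xs arbitrary: m)
  case Nil then show ?case by simp
next
  case (Cons a xs) then show ?case by (cases m) auto
qed

lemma trunc_enc: "length xs = m \<Longrightarrow> trunc m (list_encode (xs @ [t])) = list_encode xs"
proof (induction xs arbitrary: m)
  case Nil then show ?case by simp
next
  case (Cons a xs) then show ?case by (cases m) auto
qed

lemma lastc_enc: "length xs = m \<Longrightarrow> lastc m (list_encode (xs @ [t])) = t"
proof (induction xs arbitrary: m)
  case Nil then show ?case by simp
next
  case (Cons a xs) then show ?case by (cases m) auto
qed

lemma rf_app: "rf a \<Longrightarrow> rf b \<Longrightarrow> rf (\<lambda>q. app m (a q) (b q))"
proof (induction m arbitrary: a)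
  case 0 then show ?case by (simp, intro rf_rules)
next
  case (Suc m)
  have "rf (\<lambda>q. sN (a q - 1))" using Suc.prems by (intro rf_rules)
  then have "rf (\<lambda>q. app m (sN (a q - 1)) (b q))" using Suc by blast
  then show ?case using Suc.prems by (simp, intro rf_rules)
qed

lemma rf_trunc: "rf a \<Longrightarrow> rf (\<lambda>q. trunc m (a q))"
proof (induction m arbitrary: a)
  case 0 then show ?case by (simp, intro rf_rules)
next
  case (Suc m)
  have "rf (\<lambda>q. sN (a q - 1))" using Suc.prems by (intro rf_rules)
  then have "rf (\<lambda>q. trunc m (sN (a q - 1)))" using Suc by blast
  then show ?case using Suc.prems by (simp, intro rf_rules)
qed

lemma rf_lastc: "rf a \<Longrightarrow> rf (\<lambda>q. lastc m (a q))"
proof (induction m arbitrary: a)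
  case 0 then show ?case by (simp, intro rf_rules)
next
  case (Suc m)
  have "rf (\<lambda>q. sN (a q - 1))" using Suc.prems by (intro rf_rules)
  then show ?case using Suc by simp
qed

definition repstep :: "nat \<Rightarrow> nat" where "repstep L = Suc (PP 0 L)"
definition rep :: "nat \<Rightarrow> nat" where "rep e = (repstep ^^ e) 0"

lemma rep_Suc: "rep (Suc e) = Suc (PP 0 (rep e))"
  unfolding rep_def repstep_def by simp

lemma rep_enc: "rep e = list_encode (replicate e 0)"
  by (induction e) (simp_all add: rep_Suc, simp add: rep_def)

lemma rep_ge: "e \<le> rep e"
proof (induction e)
  case 0 then show ?case by simp
next
  case (Suc e)
  have "rep e \<le> PP 0 (rep e)" by (rule le_prod_encode_2)
  then show ?case using Suc by (simp add: rep_Suc)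
qed

lemma rf_rep: "rf a \<Longrightarrow> rf (\<lambda>q. rep (a q))"
proof -
  assume "rf a"
  have "rf repstep" using rf_rules(5)[OF rf_pair[OF rf_const rf_id]] unfolding repstep_def by simp
  then show ?thesis unfolding rep_def using \<open>rf a\<close> by (intro rf_rules)
qed

definition lenstep :: "nat \<Rightarrow> nat" where
  "lenstep q = (if fN q = 0 then q else PP (sN (fN q - 1)) (Suc (sN q)))"
definition len :: "nat \<Rightarrow> nat" where
  "len j = sN ((lenstep ^^ j) (PP j 0))"

lemma lenstep_rep: "(lenstep ^^ e) (PP (rep e) c) = PP 0 (c + e)"
proof (induction e arbitrary: c)
  case 0 then show ?case by (simp add: rep_def)
next
  case (Suc e)
  have "lenstep (PP (rep (Suc e)) c) = PP (rep e) (Suc c)"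
    unfolding lenstep_def rep_Suc by simp
  then show ?case unfolding funpow_Suc_right comp_def using Suc by simp
qed

lemma len_rep: "len (rep e) = e"
proof -
  have "(lenstep ^^ (rep e)) (PP (rep e) 0) = (lenstep ^^ (rep e - e)) ((lenstep ^^ e) (PP (rep e) 0))"
  proof -
    have "rep e = (rep e - e) + e" using rep_ge[of e] by simp
    then have "(lenstep ^^ (rep e)) (PP (rep e) 0) = (lenstep ^^ ((rep e - e) + e)) (PP (rep e) 0)" by simp
    also have "\<dots> = (lenstep ^^ (rep e - e)) ((lenstep ^^ e) (PP (rep e) 0))" by (simp only: funpow_add comp_def)
    finally show ?thesis .
  qed
  also have "\<dots> = (lenstep ^^ (rep e - e)) (PP 0 e)" by (simp add: lenstep_rep)
  also have "\<dots> = PP 0 e" by (rule funpow_fix) (simp add: lenstep_def)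
  finally show ?thesis unfolding len_def by simp
qed

lemma rf_len: "rf a \<Longrightarrow> rf (\<lambda>q. len (a q))"
proof -
  assume "rf a"
  have "rf (\<lambda>q. lenstep q)" unfolding lenstep_def by (intro rf_rules)
  then have "rf lenstep" by simp
  then show ?thesis unfolding len_def using \<open>rf a\<close> by (intro rf_rules)
qed


fun dflt :: "bcomp \<Rightarrow> bval" where
  "dflt BN = VN 0" | "dflt BZ = VZ 0" | "dflt (BW k) = VW []"

fun firstv :: "bcomp \<Rightarrow> nat \<Rightarrow> bval" where
  "firstv BN e = VN (rep e)"
| "firstv BZ e = VZ (int_decode (rep e))"
| "firstv (BW k) e = VW (replicate e 0)"

definition pt :: "bcomp list \<Rightarrow> nat \<Rightarrow> bval list" where
  "pt cs e = firstv (hd cs) e # map dflt (tl cs)"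

definition cex :: "nat \<Rightarrow> nat" where "cex n = len (fN (n - 1))"

lemma rf_cex: "rf a \<Longrightarrow> rf (\<lambda>q. cex (a q))"
  unfolding cex_def by (intro rf_len rf_rules)

lemma enc_firstv: "enc_val (firstv b e) = rep e"
  by (cases b) (simp_all add: rep_enc)

lemma in_dflt: "in_comp b (dflt b)" by (cases b) simp_all

lemma in_firstv: "(\<And>k. b = BW k \<Longrightarrow> k \<ge> 1) \<Longrightarrow> in_comp b (firstv b e)"
  by (cases b) auto

lemma bspace_len: "x \<in> bspace cs \<Longrightarrow> length x = length cs"
  unfolding bspace_def by (simp add: list_all2_lengthD)

lemma pt_in: "basic_space cs \<Longrightarrow> pt cs e \<in> bspace cs"
proof -
  assume bs: "basic_space cs"
  then obtain c cs' where cs: "cs = c # cs'" unfolding basic_space_def by (cases cs) auto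
  have "in_comp c (firstv c e)" using bs cs by (intro in_firstv) (auto simp: basic_space_def)
  moreover have "list_all2 in_comp cs' (map dflt cs')"
    by (induction cs') (simp_all add: in_dflt)
  ultimately show ?thesis unfolding bspace_def pt_def cs by simp
qed

lemma benc_pt: "benc (pt cs e) = Suc (PP (rep e) (list_encode (map (enc_val \<circ> dflt) (tl cs))))"
  unfolding benc_def pt_def by (simp add: enc_firstv)

lemma cex_pt: "cex (benc (pt cs e)) = e"
  unfolding cex_def benc_pt by (simp add: len_rep)

lemma benc_snoc: "benc (x @ [VN t]) = list_encode (map enc_val x @ [t])"
  unfolding benc_def by simp

lemma benc_app: "x \<in> bspace cs \<Longrightarrow> benc (x @ [VN t]) = app (length cs) (benc x) t"
  unfolding benc_snoc using app_enc bspace_len by (simp add: benc_def)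

lemma benc_trunc: "x \<in> bspace cs \<Longrightarrow> trunc (length cs) (benc (x @ [VN t])) = benc x"
  unfolding benc_snoc using trunc_enc bspace_len by (simp add: benc_def)

lemma benc_last: "x \<in> bspace cs \<Longrightarrow> lastc (length cs) (benc (x @ [VN t])) = t"
  unfolding benc_snoc using lastc_enc bspace_len by simp

lemma cex_snoc: "x \<noteq> [] \<Longrightarrow> cex (benc (x @ [VN t])) = cex (benc x)"
  unfolding cex_def benc_def by (cases x) simp_all

lemma bspace_ne: "basic_space cs \<Longrightarrow> x \<in> bspace cs \<Longrightarrow> x \<noteq> []"
  using bspace_len unfolding basic_space_def by fastforce


lemma maxf_single: "(\<And>t a. f x t = Some a \<Longrightarrow> a = d) \<Longrightarrow> f x t0 = Some d \<Longrightarrow> maxf lt f x = Some d"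
proof -
  assume a: "\<And>t a. f x t = Some a \<Longrightarrow> a = d" "f x t0 = Some d"
  have V: "{d. \<exists>t. f x t = Some d} = {d}"
  proof (rule set_eqI)
    fix e show "e \<in> {d. \<exists>t. f x t = Some d} \<longleftrightarrow> e \<in> {d}" using a(1)[of _ e] a(2) by blast
  qed
  have "(THE m. m \<in> {d} \<and> (\<forall>e\<in>{d}. e = m \<or> lt e m)) = d" by (rule the_equality) auto
  then show ?thesis unfolding maxf_def Let_def V by simp
qed

lemma minf_single: "(\<And>t a. f x t = Some a \<Longrightarrow> a = d) \<Longrightarrow> f x t0 = Some d \<Longrightarrow> minf lt f x = Some d"
proof -
  assume a: "\<And>t a. f x t = Some a \<Longrightarrow> a = d" "f x t0 = Some d"
  have V: "{d. \<exists>t. f x t = Some d} = {d}"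
  proof (rule set_eqI)
    fix e show "e \<in> {d. \<exists>t. f x t = Some d} \<longleftrightarrow> e \<in> {d}" using a(1)[of _ e] a(2) by blast
  qed
  have "(THE m. m \<in> {d} \<and> (\<forall>e\<in>{d}. e = m \<or> lt m e)) = d" by (rule the_equality) auto
  then show ?thesis unfolding minf_def Let_def V by simp
qed

lemma maxf_none: "(\<And>t. f x t = None) \<Longrightarrow> maxf lt f x = None"
  unfolding maxf_def Let_def by simp

lemma rho_inv: "bij \<rho> \<Longrightarrow> inv \<rho> (\<rho> k) = k"
  by (simp add: bij_is_inj)
lemma rho_inv2: "bij \<rho> \<Longrightarrow> \<rho> (inv \<rho> d) = d"
  by (simp add: bij_is_surj surj_f_inv_f)
lemma rho_inv_eq: "bij \<rho> \<Longrightarrow> inv \<rho> a = inv \<rho> b \<longleftrightarrow> a = b"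
proof
  assume b: "bij \<rho>" "inv \<rho> a = inv \<rho> b"
  then have "\<rho> (inv \<rho> a) = \<rho> (inv \<rho> b)" by simp
  then show "a = b" using rho_inv2[OF b(1)] by simp
qed simp

lemma L1:
  assumes "F \<in> PR cs \<rho>"
  shows "F \<in> MaxPR cs lt \<rho>" and "F \<in> Rec cs \<rho> \<Longrightarrow> F \<in> MaxRec cs lt \<rho>"
proof -
  obtain g where g: "partrec g" "\<forall>x\<in>bspace cs. g (benc x) = map_option (inv \<rho>) (F x)"
    and off: "\<forall>x. x \<notin> bspace cs \<longrightarrow> F x = None"
    using assms unfolding PR_def by blast
  define f where "f x t = F x" for x and t :: nat
  have pg2: "partrec (\<lambda>n. g (trunc (length cs) n))"
    by (rule partrec_comp_rf[OF g(1) rf_trunc[OF rf_id]])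
  have fPR2: "f \<in> PR2 cs \<rho>"
    unfolding PR2_def f_def
  proof (intro CollectI conjI allI impI exI[of _ "\<lambda>n. g (trunc (length cs) n)"] ballI)
    fix x t assume "x \<notin> bspace cs" then show "F x = None" using off by blast
  next
    show "partrec (\<lambda>n. g (trunc (length cs) n))" by (rule pg2)
  next
    fix x t assume "x \<in> bspace cs"
    then show "g (trunc (length cs) (benc (x @ [VN t]))) = map_option (inv \<rho>) (F x)"
      using g(2) by (simp add: benc_trunc)
  qed
  have mono: "mono_inc lt f" unfolding mono_inc_def f_def by auto
  have mx: "maxf lt f = F"
  proof
    fix x show "maxf lt f x = F x"
    proof (cases "F x")
      case None then show ?thesis by (simp add: maxf_none f_def)
    next
      case (Some d)
      have "maxf lt f x = Some d" by (rule maxf_single[of f x d 0]) (use Some in \<open>simp_all add: f_def\<close>)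
      then show ?thesis using Some by simp
    qed
  qed
  show "F \<in> MaxPR cs lt \<rho>" unfolding MaxPR_def using fPR2 mono mx by blast
  assume "F \<in> Rec cs \<rho>"
  then have "f \<in> Rec2 cs \<rho>" unfolding Rec_def Rec2_def using fPR2 by (simp add: f_def)
  then show "F \<in> MaxRec cs lt \<rho>" unfolding MaxRec_def using mono mx by blast
qed


lemma code_of_PR2:
  assumes "f \<in> PR2 cs \<rho>"
  obtains cd where "\<forall>x t. x \<notin> bspace cs \<longrightarrow> f x t = None"
    "\<forall>x\<in>bspace cs. \<forall>t. sem cd (benc (x @ [VN t])) = map_option (inv \<rho>) (f x t)"
proof -
  obtain g where g: "partrec g" "\<forall>x\<in>bspace cs. \<forall>t. g (benc (x @ [VN t])) = map_option (inv \<rho>) (f x t)"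
    and off: "\<forall>x t. x \<notin> bspace cs \<longrightarrow> f x t = None"
    using assms unfolding PR2_def by blast
  obtain cd where "sem cd = g" using partrec_code[OF g(1)] by blast
  then show ?thesis using that off g(2) by blast
qed

lemma evtag_evalk: "evtag c n s = 2 \<Longrightarrow> evalk c n s = Some (evval c n s)"
  unfolding evalk_def by simp

lemma evalk_evtag: "evalk c n s = Some v \<Longrightarrow> evtag c n s = 2 \<and> evval c n s = v"
  unfolding evalk_def by (cases "evtag c n s = 2") simp_all

lemma mono_empty_uniq:
  assumes mono: "mono_inc lt f" and empty: "\<forall>a b. \<not> lt a b"
  shows "f x t = Some a \<Longrightarrow> f x s = Some b \<Longrightarrow> a = b"
proof -
  assume h: "f x t = Some a" "f x s = Some b"
  have m: "\<forall>x t s a b. t \<le> s \<longrightarrow> f x t = Some a \<longrightarrow> f x s = Some b \<longrightarrow> a = b \<or> lt a b"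
    using mono unfolding mono_inc_def by blast
  show "a = b"
  proof (cases "t \<le> s")
    case True then show ?thesis using m h empty by blast
  next
    case False then have "s \<le> t" by simp
    then show ?thesis using m h empty by blast
  qed
qed

lemma L2:
  assumes rho: "bij \<rho>" and empty: "\<forall>a b. \<not> lt a b" and F: "F \<in> MaxPR cs lt \<rho>"
  shows "F \<in> PR cs \<rho>" and "\<forall>x\<in>bspace cs. (\<exists>t. \<exists>f. F = maxf lt f \<and> mono_inc lt f \<and> f x t \<noteq> None) \<longrightarrow> F x \<noteq> None"
proof -
  obtain f where Ff: "F = maxf lt f" and fPR2: "f \<in> PR2 cs \<rho>" and mono: "mono_inc lt f"
    using F unfolding MaxPR_def by auto
  obtain cd where off: "\<forall>x t. x \<notin> bspace cs \<longrightarrow> f x t = None"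
    and enc: "\<forall>x\<in>bspace cs. \<forall>t. sem cd (benc (x @ [VN t])) = map_option (inv \<rho>) (f x t)"
    using code_of_PR2[OF fPR2] by blast
  define c0 where "c0 = encc cd"
  define mm where "mm = length cs"
  have uniq: "f x t = Some a \<Longrightarrow> f x s = Some b \<Longrightarrow> a = b" for x t s a b
    by (rule mono_empty_uniq[OF mono empty])
  define H where "H q = (if evtag c0 (app mm (fN q) (fN (sN q))) (sN (sN q)) = 2 then 0 else (1::nat))" for q
  define out where "out q = evval c0 (app mm (fN q) (fN (sN q))) (sN (sN q))" for q
  define G where "G n = (if \<exists>k. H (PP n k) = 0 then Some (out (PP n (LEAST k. H (PP n k) = 0))) else None)" for n
  have rfH: "rf H" unfolding H_def[abs_def] by (intro rf_rules rf_evtag rf_app)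
  have rfo: "rf out" unfolding out_def[abs_def] by (intro rf_rules rf_evval rf_app)
  have pG: "partrec G" unfolding G_def[abs_def] by (rule partrec_mu_out[OF rfH rfo])
  have key: "evtag c0 (benc (x @ [VN t])) s = 2 \<Longrightarrow> f x t = Some (\<rho> (evval c0 (benc (x @ [VN t])) s))"
    if x: "x \<in> bspace cs" for x t s
  proof -
    assume "evtag c0 (benc (x @ [VN t])) s = 2"
    then have "evalk (encc cd) (benc (x @ [VN t])) s = Some (evval c0 (benc (x @ [VN t])) s)"
      unfolding c0_def by (rule evtag_evalk)
    then have "sem cd (benc (x @ [VN t])) = Some (evval c0 (benc (x @ [VN t])) s)"
      using sem_evalk by blast
    then have "map_option (inv \<rho>) (f x t) = Some (evval c0 (benc (x @ [VN t])) s)" using enc x by simp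
    then obtain d where d: "f x t = Some d" "inv \<rho> d = evval c0 (benc (x @ [VN t])) s" by auto
    have "d = \<rho> (inv \<rho> d)" using rho_inv2[OF rho] by simp
    then show ?thesis using d by simp
  qed
  have key2: "f x t = Some d \<Longrightarrow> \<exists>s. evtag c0 (benc (x @ [VN t])) s = 2" if x: "x \<in> bspace cs" for x t d
  proof -
    assume "f x t = Some d"
    then have "sem cd (benc (x @ [VN t])) = Some (inv \<rho> d)" using enc x by simp
    then obtain s where "evalk (encc cd) (benc (x @ [VN t])) s = Some (inv \<rho> d)" using sem_evalk by blast
    then show ?thesis unfolding c0_def using evalk_evtag by blast
  qed
  have Gx: "G (benc x) = map_option (inv \<rho>) (F x)" if x: "x \<in> bspace cs" for x
  proof (cases "\<exists>k. H (PP (benc x) k) = 0")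
    case True
    define K where "K = (LEAST k. H (PP (benc x) k) = 0)"
    have "H (PP (benc x) K) = 0" unfolding K_def using True by (rule LeastI_ex)
    then have "evtag c0 (benc (x @ [VN (fN K)])) (sN K) = 2"
      unfolding H_def using benc_app[OF x] mm_def by (simp split: if_splits)
    then have fx: "f x (fN K) = Some (\<rho> (out (PP (benc x) K)))"
      unfolding out_def using key[OF x] benc_app[OF x] mm_def by simp
    have "F x = Some (\<rho> (out (PP (benc x) K)))" unfolding Ff
      by (rule maxf_single[of f x _ "fN K"]) (use uniq fx in blast)+
    moreover have "G (benc x) = Some (out (PP (benc x) K))" unfolding G_def K_def using True by simp
    ultimately show ?thesis using rho_inv[OF rho] by simp
  next
    case False
    have "f x t = None" for t
    proof (rule ccontr)
      assume "f x t \<noteq> None"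
      then obtain d where "f x t = Some d" by auto
      then obtain s where "evtag c0 (benc (x @ [VN t])) s = 2" using key2[OF x] by blast
      then have "H (PP (benc x) (PP t s)) = 0" unfolding H_def using benc_app[OF x] mm_def by simp
      then show False using False by blast
    qed
    then have "F x = None" unfolding Ff by (rule maxf_none)
    moreover have "G (benc x) = None" unfolding G_def using False by simp
    ultimately show ?thesis by simp
  qed
  have offF: "x \<notin> bspace cs \<Longrightarrow> F x = None" for x
    unfolding Ff by (rule maxf_none) (use off in blast)
  show "F \<in> PR cs \<rho>" unfolding PR_def
  proof (intro CollectI conjI allI impI exI[of _ G] ballI)
    fix x assume "x \<notin> bspace cs" then show "F x = None" by (rule offF)
  next
    show "partrec G" by (rule pG)
  next
    fix x assume "x \<in> bspace cs" then show "G (benc x) = map_option (inv \<rho>) (F x)" by (rule Gx)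
  qed
  show "\<forall>x\<in>bspace cs. (\<exists>t. \<exists>f. F = maxf lt f \<and> mono_inc lt f \<and> f x t \<noteq> None) \<longrightarrow> F x \<noteq> None"
  proof (intro ballI impI)
    fix x assume "\<exists>t f. F = maxf lt f \<and> mono_inc lt f \<and> f x t \<noteq> None"
    then obtain t f' d where h: "F = maxf lt f'" "mono_inc lt f'" "f' x t = Some d" by blast
    have u: "f' x s = Some a \<Longrightarrow> a = d" for s a
      using mono_empty_uniq[OF h(2) empty h(3)] by simp
    have "maxf lt f' x = Some d" by (rule maxf_single[of f' x d t lt]) (rule u, assumption, rule h(3))
    then show "F x \<noteq> None" unfolding h(1) by simp
  qed
qed


lemma evtag_mono: "evtag c n t = 2 \<Longrightarrow> t \<le> s \<Longrightarrow> evtag c n s = 2"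
  using evtag_evalk evalk_mono evalk_evtag by blast

lemma rf_cond_const: "rf c \<Longrightarrow> rf (\<lambda>n. if c n = 2 then (p::nat) else q)"
  by (intro rf_rules)

lemma mu_left: "partrec (\<lambda>z. if z = 0 then Some 0 else None)"
proof -
  have "partrec (\<lambda>n. if (\<exists>k. Some (fst (prod_decode (prod_encode (n, k)))) = Some 0 \<and> (\<forall>j<k. Some (fst (prod_decode (prod_encode (n, j)))) \<noteq> None))
                 then Some (LEAST k. Some (fst (prod_decode (prod_encode (n, k)))) = Some 0 \<and> (\<forall>j<k. Some (fst (prod_decode (prod_encode (n, j)))) \<noteq> None))
                 else None)"
    by (rule pr_mu[OF pr_left])
  then show ?thesis by (rule partrec_cong) simp
qed

lemma L3:
  assumes bs: "basic_space cs" and rho: "bij \<rho>" and irr: "irreflp lt" and tr: "transp lt" and ab: "lt a b"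
  shows "\<exists>F\<in>MaxRec cs lt \<rho>. (\<forall>x\<in>bspace cs. F x \<noteq> None) \<and> F \<notin> PR cs \<rho>"
proof -
  have anb: "a \<noteq> b" using ab irr by (auto simp: irreflp_def)
  define mm where "mm = length cs"
  define f where "f x t = (if x \<in> bspace cs then Some (if evtag (cex (benc x)) (cex (benc x)) t = 2 then b else a) else None)" for x t
  define F where "F = maxf lt f"
  define h where "h n = (if evtag (cex n) (cex n) (lastc mm n) = 2 then inv \<rho> b else inv \<rho> a)" for n
  have rfh: "rf h" unfolding h_def[abs_def] by (intro rf_rules rf_evtag rf_cex rf_lastc)
  have fRec2: "f \<in> Rec2 cs \<rho>"
    unfolding Rec2_def PR2_def
  proof (intro CollectI conjI allI impI exI[of _ "\<lambda>n. Some (h n)"] ballI)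
    fix x t assume "x \<notin> bspace cs" then show "f x t = None" unfolding f_def by simp
  next
    show "partrec (\<lambda>n. Some (h n))" using rfh unfolding rf_def .
  next
    fix x t assume x: "x \<in> bspace cs"
    have "cex (benc (x @ [VN t])) = cex (benc x)" by (rule cex_snoc[OF bspace_ne[OF bs x]])
    moreover have "lastc mm (benc (x @ [VN t])) = t" unfolding mm_def by (rule benc_last[OF x])
    ultimately show "Some (h (benc (x @ [VN t]))) = map_option (inv \<rho>) (f x t)"
      unfolding h_def f_def using x by simp
  next
    fix x t assume "x \<in> bspace cs" then show "f x t \<noteq> None" unfolding f_def by simp
  qed
  have mono: "mono_inc lt f"
    unfolding mono_inc_def
  proof (intro allI impI)
    fix x t s a' b' assume h: "t \<le> s" "f x t = Some a'" "f x s = Some b'"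
    show "a' = b' \<or> lt a' b'"
    proof (cases "evtag (cex (benc x)) (cex (benc x)) t = 2")
      case True
      then have "evtag (cex (benc x)) (cex (benc x)) s = 2" using evtag_mono h(1) by blast
      then show ?thesis using h True unfolding f_def by (simp split: if_splits)
    next
      case False
      then show ?thesis using h ab unfolding f_def by (auto split: if_splits)
    qed
  qed
  have Fval: "F x = Some (if \<exists>t. evtag (cex (benc x)) (cex (benc x)) t = 2 then b else a)"
    if x: "x \<in> bspace cs" for x
  proof (cases "\<exists>t. evtag (cex (benc x)) (cex (benc x)) t = 2")
    case True
    then obtain t0 where t0: "evtag (cex (benc x)) (cex (benc x)) t0 = 2" by blast
    define V where "V = {d. \<exists>t. f x t = Some d}"
    have Vsub: "V \<subseteq> {a, b}" unfolding V_def f_def using x by auto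
    have bV: "b \<in> V" unfolding V_def f_def using x t0 by auto
    have fin: "finite V" using Vsub finite_subset by blast
    have "(THE m. m \<in> V \<and> (\<forall>d\<in>V. d = m \<or> lt d m)) = b"
    proof (rule the_equality)
      show "b \<in> V \<and> (\<forall>d\<in>V. d = b \<or> lt d b)" using bV Vsub ab by auto
    next
      fix m assume m: "m \<in> V \<and> (\<forall>d\<in>V. d = m \<or> lt d m)"
      show "m = b"
      proof (rule ccontr)
        assume "m \<noteq> b"
        then have "m = a" using m Vsub by auto
        then have "lt b a" using m bV anb by auto
        then have "lt a a" using ab tr by (meson transpD)
        then show False using irr by (simp add: irreflp_def)
      qed
    qed
    then have "F x = Some b" unfolding F_def maxf_def Let_def V_def[symmetric] using fin bV by auto
    then show ?thesis using True by simp
  next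
    case False
    have "F x = Some a" unfolding F_def
      by (rule maxf_single[of f x a 0]) (use x False in \<open>auto simp: f_def split: if_splits\<close>)
    then show ?thesis using False by simp
  qed
  have FMax: "F \<in> MaxRec cs lt \<rho>" unfolding MaxRec_def F_def using fRec2 mono by blast
  have Ftot: "\<forall>x\<in>bspace cs. F x \<noteq> None" using Fval by simp
  have FnPR: "F \<notin> PR cs \<rho>"
  proof
    assume "F \<in> PR cs \<rho>"
    then obtain g where g: "partrec g" "\<forall>x\<in>bspace cs. g (benc x) = map_option (inv \<rho>) (F x)"
      unfolding PR_def by blast
    define Rc where "Rc = list_encode (map (enc_val \<circ> dflt) (tl cs))"
    have bpt: "benc (pt cs e) = Suc (PP (rep e) Rc)" for e unfolding Rc_def by (rule benc_pt)
    have pchi: "partrec (\<lambda>e. g (Suc (PP (rep e) Rc)))"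
      by (rule partrec_comp_rf[OF g(1)]) (intro rf_rules rf_rep)
    define D where "D v = (if (if v = inv \<rho> b then 1 else 0) = (0::nat) then Some (0::nat) else None)" for v
    have pD: "partrec D" unfolding D_def[abs_def]
      by (rule partrec_comp_rf[OF mu_left, of "\<lambda>v. if v = inv \<rho> b then 1 else 0"]) (intro rf_rules)
    define d where "d e = Option.bind (g (Suc (PP (rep e) Rc))) D" for e
    have pd: "partrec d" unfolding d_def[abs_def] by (rule pr_comp[OF pD pchi])
    obtain cd where cd: "sem cd = d" using partrec_code[OF pd] by blast
    define c0 where "c0 = encc cd"
    define x0 where "x0 = pt cs c0"
    have x0: "x0 \<in> bspace cs" unfolding x0_def by (rule pt_in[OF bs])
    have cx0: "cex (benc x0) = c0" unfolding x0_def by (rule cex_pt)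
    define HH where "HH = (\<exists>t. evtag c0 c0 t = 2)"
    have "g (benc x0) = Some (inv \<rho> (if HH then b else a))"
      using g(2) x0 Fval[OF x0] cx0 unfolding HH_def by simp
    then have dc0: "d c0 = (if HH then None else Some 0)"
      unfolding d_def D_def using bpt[of c0] x0_def rho_inv_eq[OF rho] anb by auto
    have "HH \<longleftrightarrow> d c0 \<noteq> None"
    proof
      assume HH
      then obtain t where "evtag c0 c0 t = 2" unfolding HH_def by blast
      then have "evalk (encc cd) c0 t = Some (evval c0 c0 t)" unfolding c0_def by (rule evtag_evalk)
      then have "sem cd c0 = Some (evval c0 c0 t)" using sem_evalk by blast
      then show "d c0 \<noteq> None" using cd by simp
    next
      assume "d c0 \<noteq> None"
      then obtain v where "sem cd c0 = Some v" using cd by auto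
      then obtain t where "evalk (encc cd) c0 t = Some v" using sem_evalk by blast
      then show HH unfolding HH_def c0_def using evalk_evtag by blast
    qed
    then show False using dc0 by (cases HH) simp_all
  qed
  show ?thesis using FMax Ftot FnPR by blast
qed


lemma chain_max:
  assumes "finite V" "V \<noteq> {}" "\<forall>a\<in>V. \<forall>b\<in>V. a = b \<or> lt a b \<or> lt b a" "transp lt"
  shows "\<exists>m\<in>V. \<forall>d\<in>V. d = m \<or> lt d m"
  using assms
proof (induction V rule: finite_ne_induct)
  case (singleton x) then show ?case by simp
next
  case (insert x F)
  then obtain m where m: "m \<in> F" "\<forall>d\<in>F. d = m \<or> lt d m" by auto
  have "x = m \<or> lt x m \<or> lt m x" using insert.prems m(1) by auto
  then show ?case
  proof (elim disjE)
    assume "x = m" then show ?thesis using m by auto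
  next
    assume "lt x m" then show ?thesis using m by auto
  next
    assume mx: "lt m x"
    have "\<forall>d\<in>insert x F. d = x \<or> lt d x"
    proof
      fix d assume "d \<in> insert x F"
      then show "d = x \<or> lt d x" using m mx insert.prems(2) by (auto dest: transpD)
    qed
    then show ?thesis by auto
  qed
qed

lemma maxf_prop:
  assumes irr: "irreflp lt" and tr: "transp lt"
    and ch: "\<And>t s a b. f x t = Some a \<Longrightarrow> f x s = Some b \<Longrightarrow> a = b \<or> lt a b \<or> lt b a"
    and mx: "maxf lt f x = Some d"
  shows "f x t = Some e \<Longrightarrow> e = d \<or> lt e d"
proof -
  assume fe: "f x t = Some e"
  define V where "V = {d. \<exists>t. f x t = Some d}"
  have fin: "finite V" and ne: "V \<noteq> {}" and th: "(THE m. m \<in> V \<and> (\<forall>d\<in>V. d = m \<or> lt d m)) = d"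
    using mx unfolding maxf_def Let_def V_def[symmetric] by (auto split: if_splits)
  have chV: "\<forall>a\<in>V. \<forall>b\<in>V. a = b \<or> lt a b \<or> lt b a" unfolding V_def using ch by blast
  obtain m where m: "m \<in> V" "\<forall>d\<in>V. d = m \<or> lt d m" using chain_max[OF fin ne chV tr] by blast
  have "(THE m. m \<in> V \<and> (\<forall>d\<in>V. d = m \<or> lt d m)) = m"
  proof (rule the_equality)
    show "m \<in> V \<and> (\<forall>d\<in>V. d = m \<or> lt d m)" using m by blast
  next
    fix m' assume m': "m' \<in> V \<and> (\<forall>d\<in>V. d = m' \<or> lt d m')"
    show "m' = m"
    proof (rule ccontr)
      assume "m' \<noteq> m"
      then have "lt m' m" "lt m m'" using m m' by auto
      then have "lt m m" using tr by (meson transpD)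
      then show False using irr by (simp add: irreflp_def)
    qed
  qed
  then have "d = m" using th by simp
  moreover have "e \<in> V" unfolding V_def using fe by blast
  ultimately show ?thesis using m by blast
qed

lemma minf_prop:
  assumes irr: "irreflp lt" and tr: "transp lt"
    and ch: "\<And>t s a b. f x t = Some a \<Longrightarrow> f x s = Some b \<Longrightarrow> a = b \<or> lt a b \<or> lt b a"
    and mn: "minf lt f x = Some d"
  shows "f x t = Some e \<Longrightarrow> e = d \<or> lt d e"
proof -
  assume fe: "f x t = Some e"
  define V where "V = {d. \<exists>t. f x t = Some d}"
  have fin: "finite V" and ne: "V \<noteq> {}" and th: "(THE m. m \<in> V \<and> (\<forall>d\<in>V. d = m \<or> lt m d)) = d"
    using mn unfolding minf_def Let_def V_def[symmetric] by (auto split: if_splits)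
  have chV: "\<forall>a\<in>V. \<forall>b\<in>V. a = b \<or> (\<lambda>a b. lt b a) a b \<or> (\<lambda>a b. lt b a) b a" unfolding V_def using ch by blast
  have tr': "transp (\<lambda>a b. lt b a)" using tr unfolding transp_def by blast
  obtain m where m: "m \<in> V" "\<forall>d\<in>V. d = m \<or> lt m d" using chain_max[OF fin ne chV tr'] by blast
  have "(THE m. m \<in> V \<and> (\<forall>d\<in>V. d = m \<or> lt m d)) = m"
  proof (rule the_equality)
    show "m \<in> V \<and> (\<forall>d\<in>V. d = m \<or> lt m d)" using m by blast
  next
    fix m' assume m': "m' \<in> V \<and> (\<forall>d\<in>V. d = m' \<or> lt m' d)"
    show "m' = m"
    proof (rule ccontr)
      assume "m' \<noteq> m"
      then have "lt m' m" "lt m m'" using m m' by auto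
      then have "lt m m" using tr by (meson transpD)
      then show False using irr by (simp add: irreflp_def)
    qed
  qed
  then have "d = m" using th by simp
  moreover have "e \<in> V" unfolding V_def using fe by blast
  ultimately show ?thesis using m by blast
qed


lemma chain_inc: "mono_inc lt f \<Longrightarrow> f x t = Some a \<Longrightarrow> f x s = Some b \<Longrightarrow> a = b \<or> lt a b \<or> lt b a"
proof -
  assume m: "mono_inc lt f" and h: "f x t = Some a" "f x s = Some b"
  have mm: "\<forall>x t s a b. t \<le> s \<longrightarrow> f x t = Some a \<longrightarrow> f x s = Some b \<longrightarrow> a = b \<or> lt a b"
    using m unfolding mono_inc_def by blast
  show ?thesis
  proof (cases "t \<le> s")
    case True then show ?thesis using mm h by blast
  next
    case False then have "s \<le> t" by simp
    then show ?thesis using mm h by blast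
  qed
qed

lemma chain_dec: "mono_dec lt f \<Longrightarrow> f x t = Some a \<Longrightarrow> f x s = Some b \<Longrightarrow> a = b \<or> lt a b \<or> lt b a"
proof -
  assume m: "mono_dec lt f" and h: "f x t = Some a" "f x s = Some b"
  have mm: "\<forall>x t s a b. t \<le> s \<longrightarrow> f x t = Some a \<longrightarrow> f x s = Some b \<longrightarrow> a = b \<or> lt b a"
    using m unfolding mono_dec_def by blast
  show ?thesis
  proof (cases "t \<le> s")
    case True then show ?thesis using mm h by blast
  next
    case False then have "s \<le> t" by simp
    then show ?thesis using mm h by blast
  qed
qed

lemma L4:
  assumes bs: "basic_space cs" and rho: "bij \<rho>" and irr: "irreflp lt" and tr: "transp lt"
  shows "\<not> (PR cs \<rho> \<subseteq> MinRec cs lt \<rho> \<union> MaxRec cs lt \<rho>)"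
proof -
  define mm where "mm = length cs"
  define Hf where "Hf q = (let n = fN q; c = cex n; t = fN (sN q); s = sN (sN q) in
     if evtag c (app mm n 0) s = 2 then (if evtag c (app mm n t) s = 2 then
        (if evval c (app mm n 0) s = evval c (app mm n t) s then 1 else (0::nat)) else 1) else 1)" for q
  define out where "out q = evval (cex (fN q)) (app mm (fN q) 0) (sN (sN q))" for q
  define G where "G n = (if \<exists>k. Hf (PP n k) = 0 then Some (out (PP n (LEAST k. Hf (PP n k) = 0))) else None)" for n
  have rfH: "rf Hf" unfolding Hf_def[abs_def] Let_def by (intro rf_rules rf_evtag rf_evval rf_app rf_cex)
  have rfo: "rf out" unfolding out_def[abs_def] by (intro rf_rules rf_evval rf_app rf_cex)
  have pG: "partrec G" unfolding G_def[abs_def] by (rule partrec_mu_out[OF rfH rfo])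
  define psi where "psi x = (if x \<in> bspace cs then map_option \<rho> (G (benc x)) else None)" for x
  have psiPR: "psi \<in> PR cs \<rho>" unfolding PR_def
  proof (intro CollectI conjI allI impI exI[of _ G] ballI)
    fix x assume "x \<notin> bspace cs" then show "psi x = None" unfolding psi_def by simp
  next
    show "partrec G" by (rule pG)
  next
    fix x assume "x \<in> bspace cs" then show "G (benc x) = map_option (inv \<rho>) (psi x)"
      unfolding psi_def using rho_inv[OF rho] by (cases "G (benc x)") simp_all
  qed
  have notin: False if f: "f \<in> Rec2 cs \<rho>" and
    P: "(psi = maxf lt f \<and> mono_inc lt f) \<or> (psi = minf lt f \<and> mono_dec lt f)" for f
  proof -
    have fPR2: "f \<in> PR2 cs \<rho>" and ftot: "\<forall>x\<in>bspace cs. \<forall>t. f x t \<noteq> None"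
      using f unfolding Rec2_def by simp_all
    obtain cd where "\<forall>x t. x \<notin> bspace cs \<longrightarrow> f x t = None"
      and enc: "\<forall>x\<in>bspace cs. \<forall>t. sem cd (benc (x @ [VN t])) = map_option (inv \<rho>) (f x t)"
      by (rule code_of_PR2[OF fPR2])
    define c0 where "c0 = encc cd"
    define x0 where "x0 = pt cs c0"
    define n0 where "n0 = benc x0"
    have x0: "x0 \<in> bspace cs" unfolding x0_def by (rule pt_in[OF bs])
    have cn0: "cex n0 = c0" unfolding n0_def x0_def by (rule cex_pt)
    define dl where "dl t = the (f x0 t)" for t
    have fdl: "f x0 t = Some (dl t)" for t
    proof -
      have "f x0 t \<noteq> None" using ftot x0 by blast
      then show ?thesis unfolding dl_def by auto
    qed
    have ap: "app mm n0 t = benc (x0 @ [VN t])" for t unfolding mm_def n0_def by (rule benc_app[OF x0, symmetric])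
    have semx: "sem cd (app mm n0 t) = Some (inv \<rho> (dl t))" for t
    proof -
      have "sem cd (benc (x0 @ [VN t])) = map_option (inv \<rho>) (f x0 t)" using enc x0 by blast
      then show ?thesis unfolding ap fdl by simp
    qed
    have evv: "evtag c0 (app mm n0 t) s = 2 \<Longrightarrow> evval c0 (app mm n0 t) s = inv \<rho> (dl t)" for t s
    proof -
      assume "evtag c0 (app mm n0 t) s = 2"
      then have "evalk (encc cd) (app mm n0 t) s = Some (evval c0 (app mm n0 t) s)"
        unfolding c0_def by (rule evtag_evalk)
      then have "sem cd (app mm n0 t) = Some (evval c0 (app mm n0 t) s)" unfolding sem_evalk by blast
      then show ?thesis using semx[of t] by simp
    qed
    have evex: "\<exists>s. evtag c0 (app mm n0 t) s = 2" for t
    proof -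
      obtain s where "evalk (encc cd) (app mm n0 t) s = Some (inv \<rho> (dl t))"
        using semx[of t] unfolding sem_evalk by blast
      then show ?thesis unfolding c0_def using evalk_evtag by blast
    qed
    have Hiff: "(\<exists>k. Hf (PP n0 k) = 0) \<longleftrightarrow> (\<exists>t. dl t \<noteq> dl 0)"
    proof
      assume "\<exists>k. Hf (PP n0 k) = 0"
      then obtain k where k: "Hf (PP n0 k) = 0" by blast
      define t where "t = fN k"
      define s where "s = sN k"
      have h: "evtag c0 (app mm n0 0) s = 2" "evtag c0 (app mm n0 t) s = 2"
        "evval c0 (app mm n0 0) s \<noteq> evval c0 (app mm n0 t) s"
        using k unfolding Hf_def Let_def t_def s_def by (simp_all add: cn0 split: if_splits)
      then have "inv \<rho> (dl 0) \<noteq> inv \<rho> (dl t)" using evv by simp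
      then have "dl t \<noteq> dl 0" by (intro notI) simp
      then show "\<exists>t. dl t \<noteq> dl 0" by blast
    next
      assume "\<exists>t. dl t \<noteq> dl 0"
      then obtain t where t: "dl t \<noteq> dl 0" by blast
      obtain s1 where s1: "evtag c0 (app mm n0 0) s1 = 2" using evex by blast
      obtain s2 where s2: "evtag c0 (app mm n0 t) s2 = 2" using evex by blast
      define s where "s = max s1 s2"
      have e1: "evtag c0 (app mm n0 0) s = 2" using evtag_mono[OF s1] unfolding s_def by simp
      have e2: "evtag c0 (app mm n0 t) s = 2" using evtag_mono[OF s2] unfolding s_def by simp
      have "inv \<rho> (dl 0) \<noteq> inv \<rho> (dl t)" using t rho_inv_eq[OF rho] by simp
      then have "evval c0 (app mm n0 0) s \<noteq> evval c0 (app mm n0 t) s" using evv e1 e2 by simp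
      then have "Hf (PP n0 (PP t s)) = 0" unfolding Hf_def Let_def using e1 e2 by (simp add: cn0)
      then show "\<exists>k. Hf (PP n0 k) = 0" by blast
    qed
    have psi_some: "psi x0 = Some (dl 0)" if ex: "\<exists>t. dl t \<noteq> dl 0"
    proof -
      have ex': "\<exists>k. Hf (PP n0 k) = 0" using Hiff ex by blast
      define K where "K = (LEAST k. Hf (PP n0 k) = 0)"
      have "Hf (PP n0 K) = 0" unfolding K_def using ex' by (rule LeastI_ex)
      then have "evtag c0 (app mm n0 0) (sN K) = 2"
        unfolding Hf_def Let_def by (simp add: cn0 split: if_splits)
      then have "out (PP n0 K) = inv \<rho> (dl 0)" unfolding out_def using evv cn0 by simp
      then have "G n0 = Some (inv \<rho> (dl 0))" unfolding G_def K_def using ex' by simp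
      then show ?thesis unfolding psi_def n0_def using x0 rho_inv2[OF rho] by simp
    qed
    have psi_none: "psi x0 = None" if nex: "\<not> (\<exists>t. dl t \<noteq> dl 0)"
    proof -
      have "\<not> (\<exists>k. Hf (PP n0 k) = 0)" using Hiff nex by blast
      then have "G n0 = None" unfolding G_def by simp
      then show ?thesis unfolding psi_def n0_def using x0 by simp
    qed
    show False
    proof (cases "\<exists>t. dl t \<noteq> dl 0")
      case False
      have all: "f x0 t = Some a \<Longrightarrow> a = dl 0" for t a
      proof -
        assume "f x0 t = Some a"
        then have "a = dl t" using fdl[of t] by simp
        then show ?thesis using False by blast
      qed
      have "maxf lt f x0 = Some (dl 0)" by (rule maxf_single[of f x0 "dl 0" 0]) (rule all, assumption, rule fdl)
      moreover have "minf lt f x0 = Some (dl 0)" by (rule minf_single[of f x0 "dl 0" 0]) (rule all, assumption, rule fdl)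
      moreover have "psi x0 = None" by (rule psi_none[OF False])
      ultimately show False using P by (elim disjE) simp_all
    next
      case True
      then obtain t1 where t1: "dl t1 \<noteq> dl 0" by blast
      have ps: "psi x0 = Some (dl 0)" by (rule psi_some[OF True])
      from P show False
      proof
        assume h: "psi = maxf lt f \<and> mono_inc lt f"
        have ch: "f x0 t = Some a \<Longrightarrow> f x0 s = Some b \<Longrightarrow> a = b \<or> lt a b \<or> lt b a" for t s a b
          by (rule chain_inc[OF conjunct2[OF h]])
        have mx: "maxf lt f x0 = Some (dl 0)" using ps unfolding conjunct1[OF h] .
        have "dl t1 = dl 0 \<or> lt (dl t1) (dl 0)" by (rule maxf_prop[OF irr tr ch mx fdl])
        then have l1: "lt (dl t1) (dl 0)" using t1 by simp
        have mi: "\<forall>x t s a b. t \<le> s \<longrightarrow> f x t = Some a \<longrightarrow> f x s = Some b \<longrightarrow> a = b \<or> lt a b"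
          using h unfolding mono_inc_def by blast
        have "dl 0 = dl t1 \<or> lt (dl 0) (dl t1)"
          using mi[rule_format, OF le0 fdl[of 0] fdl[of t1]] .
        then have l2: "lt (dl 0) (dl t1)" using t1 by simp
        have "lt (dl 0) (dl 0)" by (rule transpD[OF tr l2 l1])
        then show False using irr by (simp add: irreflp_def)
      next
        assume h: "psi = minf lt f \<and> mono_dec lt f"
        have ch: "f x0 t = Some a \<Longrightarrow> f x0 s = Some b \<Longrightarrow> a = b \<or> lt a b \<or> lt b a" for t s a b
          by (rule chain_dec[OF conjunct2[OF h]])
        have mn: "minf lt f x0 = Some (dl 0)" using ps unfolding conjunct1[OF h] .
        have "dl t1 = dl 0 \<or> lt (dl 0) (dl t1)" by (rule minf_prop[OF irr tr ch mn fdl])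
        then have l1: "lt (dl 0) (dl t1)" using t1 by simp
        have mi: "\<forall>x t s a b. t \<le> s \<longrightarrow> f x t = Some a \<longrightarrow> f x s = Some b \<longrightarrow> a = b \<or> lt b a"
          using h unfolding mono_dec_def by blast
        have "dl 0 = dl t1 \<or> lt (dl t1) (dl 0)"
          using mi[rule_format, OF le0 fdl[of 0] fdl[of t1]] .
        then have l2: "lt (dl t1) (dl 0)" using t1 by simp
        have "lt (dl 0) (dl 0)" by (rule transpD[OF tr l1 l2])
        then show False using irr by (simp add: irreflp_def)
      qed
    qed
  qed
  show ?thesis
  proof
    assume "PR cs \<rho> \<subseteq> MinRec cs lt \<rho> \<union> MaxRec cs lt \<rho>"
    then have "psi \<in> MinRec cs lt \<rho> \<union> MaxRec cs lt \<rho>" using psiPR by blast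
    then obtain f where "f \<in> Rec2 cs \<rho>" "(psi = maxf lt f \<and> mono_inc lt f) \<or> (psi = minf lt f \<and> mono_dec lt f)"
      unfolding MinRec_def MaxRec_def by blast
    then show False by (rule notin)
  qed
qed


lemma MaxRec_sub: "MaxRec cs lt \<rho> \<subseteq> MaxPR cs lt \<rho>"
  unfolding MaxRec_def MaxPR_def Rec2_def by blast

lemma Rec_sub: "Rec cs \<rho> \<subseteq> PR cs \<rho>"
  unfolding Rec_def by blast

theorem mainTheorem10:
  fixes cs :: "bcomp list" and lt :: "'d \<Rightarrow> 'd \<Rightarrow> bool" and \<rho> :: "nat \<Rightarrow> 'd"
  assumes "basic_space cs" and "comp_poset lt \<rho>"
  shows "((\<forall>a b. \<not> lt a b) \<longrightarrow>
            PR cs \<rho> = MaxPR cs lt \<rho> \<and> Rec cs \<rho> = MaxRec cs lt \<rho>)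
       \<and> ((\<exists>a b. lt a b) \<longrightarrow>
            (\<exists>F \<in> MaxRec cs lt \<rho>. (\<forall>x\<in>bspace cs. F x \<noteq> None) \<and> F \<notin> PR cs \<rho>)
            \<and> PR cs \<rho> \<subset> MaxPR cs lt \<rho> \<and> Rec cs \<rho> \<subset> MaxRec cs lt \<rho>)
       \<and> \<not> (PR cs \<rho> \<subseteq> MinRec cs lt \<rho> \<union> MaxRec cs lt \<rho>)"
proof (intro conjI impI)
  have rho: "bij \<rho>" and irr: "irreflp lt" and tr: "transp lt"
    using assms(2) unfolding comp_poset_def by auto
  note bs = assms(1)
  {
    assume empty: "\<forall>a b. \<not> lt a b"
    show "PR cs \<rho> = MaxPR cs lt \<rho>"
    proof
      show "PR cs \<rho> \<subseteq> MaxPR cs lt \<rho>" using L1(1) by blast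
      show "MaxPR cs lt \<rho> \<subseteq> PR cs \<rho>" using L2(1)[OF rho empty] by blast
    qed
    show "Rec cs \<rho> = MaxRec cs lt \<rho>"
    proof
      show "Rec cs \<rho> \<subseteq> MaxRec cs lt \<rho>" using L1(2) Rec_sub by blast
      show "MaxRec cs lt \<rho> \<subseteq> Rec cs \<rho>"
      proof
        fix F assume F: "F \<in> MaxRec cs lt \<rho>"
        then obtain f where f: "F = maxf lt f" "f \<in> Rec2 cs \<rho>" "mono_inc lt f"
          unfolding MaxRec_def by auto
        have FP: "F \<in> MaxPR cs lt \<rho>" using F MaxRec_sub by blast
        have FPR: "F \<in> PR cs \<rho>" by (rule L2(1)[OF rho empty FP])
        have "\<forall>x\<in>bspace cs. F x \<noteq> None"
        proof
          fix x assume x: "x \<in> bspace cs"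
          have "f x 0 \<noteq> None" using f(2) x unfolding Rec2_def by simp
          then have "\<exists>t f. F = maxf lt f \<and> mono_inc lt f \<and> f x t \<noteq> None" using f by blast
          then show "F x \<noteq> None" using L2(2)[OF rho empty FP] x by blast
        qed
        then show "F \<in> Rec cs \<rho>" unfolding Rec_def using FPR by blast
      qed
    qed
  }
  {
    assume "\<exists>a b. lt a b"
    then obtain a b where ab: "lt a b" by blast
    obtain F where F: "F \<in> MaxRec cs lt \<rho>" "\<forall>x\<in>bspace cs. F x \<noteq> None" "F \<notin> PR cs \<rho>"
      using L3[OF bs rho irr tr ab] by blast
    show "\<exists>F \<in> MaxRec cs lt \<rho>. (\<forall>x\<in>bspace cs. F x \<noteq> None) \<and> F \<notin> PR cs \<rho>" using F by blast
    have s1: "PR cs \<rho> \<subseteq> MaxPR cs lt \<rho>" using L1(1) by blast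
    have "F \<in> MaxPR cs lt \<rho>" using F(1) MaxRec_sub by blast
    then show "PR cs \<rho> \<subset> MaxPR cs lt \<rho>" using s1 F(3) by blast
    have s2: "Rec cs \<rho> \<subseteq> MaxRec cs lt \<rho>" using L1(2) Rec_sub by blast
    have "F \<notin> Rec cs \<rho>" using F(3) Rec_sub by blast
    then show "Rec cs \<rho> \<subset> MaxRec cs lt \<rho>" using s2 F(1) by blast
  }
  show "\<not> (PR cs \<rho> \<subseteq> MinRec cs lt \<rho> \<union> MaxRec cs lt \<rho>)" by (rule L4[OF bs rho irr tr])
qed


end
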